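(* $$\{\varphi\in\mathrm{End}_K(P_n)\mid [x_i,\varphi]\in F_n,\ [y_i,\varphi]\in F_n\ \text{for all } i=1,\dots,n\}=\begin{cases}\mathbb{S}_1& n=1,\\ K+F_n & n>1.\end{cases}$$
   Context: $K$ is a field of characteristic zero. $\mathbb{S}_n$ is the $K$-algebra generated by $x_1,\dots,x_n,y_1,\dots,y_n$ with defining relations $y_ix_i=1$ and $[x_i,y_j]=[x_i,x_j]=[y_i,y_j]=0$ for $i\ne j$; it acts faithfully on $P_n=K[x_1,\dots,x_n]$ by $x_i*x^\alpha=x^{\alpha+e_i}$, $y_i*x^\alpha=x^{\alpha-e_i}$ if $\alpha_i>0$ and $0$ otherwise, so $\mathbb{S}_n\subset\mathrm{End}_K(P_n)$. For $k,l\in\mathbb{N}$, $E_{kl}(i):=x_i^ky_i^l-x_i^{k+1}y_i^{l+1}$; for $\alpha,\beta\in\mathbb{N}^n$, $E_{\alpha\beta}:=\prod_iE_{\alpha_i\beta_i}(i)$, and $F_n:=\bigoplus_{\alpha,\beta\in\mathbb{N}^n}KE_{\alpha\beta}$. *)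

theory Defs
  imports Main
begin

text \<open>Monomials x^alpha in P_n = K[x_1..x_n] are indexed by exponent functions
  alpha :: nat => nat vanishing outside {0..<n} (variables are indexed 0..n-1).
  A polynomial is its coefficient function.  End_K(P_n) is the set of K-linear
  self-maps of P_n; to make equality of maps meaningful they are required to
  send everything outside P_n to 0.\<close>

type_synonym 'k pol = "(nat \<Rightarrow> nat) \<Rightarrow> 'k"
type_synonym 'k op = "'k pol \<Rightarrow> 'k pol"

definition valid :: "nat \<Rightarrow> (nat \<Rightarrow> nat) \<Rightarrow> bool" where
  "valid n \<alpha> \<longleftrightarrow> (\<forall>i\<ge>n. \<alpha> i = 0)"

definition Pn :: "nat \<Rightarrow> ('k::zero) pol set" where
  "Pn n = {p. finite {\<alpha>. p \<alpha> \<noteq> 0} \<and> (\<forall>\<alpha>. p \<alpha> \<noteq> 0 \<longrightarrow> valid n \<alpha>)}"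

definition EndK :: "nat \<Rightarrow> ('k::field) op set" where
  "EndK n = {\<phi>. (\<forall>p\<in>Pn n. \<phi> p \<in> Pn n)
     \<and> (\<forall>p\<in>Pn n. \<forall>q\<in>Pn n. \<phi> (\<lambda>\<alpha>. p \<alpha> + q \<alpha>) = (\<lambda>\<alpha>. \<phi> p \<alpha> + \<phi> q \<alpha>))
     \<and> (\<forall>c. \<forall>p\<in>Pn n. \<phi> (\<lambda>\<alpha>. c * p \<alpha>) = (\<lambda>\<alpha>. c * \<phi> p \<alpha>))
     \<and> (\<forall>p. p \<notin> Pn n \<longrightarrow> \<phi> p = (\<lambda>_. 0))}"

definition Idop :: "nat \<Rightarrow> ('k::zero) op" where
  "Idop n p = (if p \<in> Pn n then p else (\<lambda>_. 0))"

definition Xop :: "nat \<Rightarrow> nat \<Rightarrow> ('k::zero) op" where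
  "Xop n i p = (if p \<in> Pn n then (\<lambda>\<beta>. if 0 < \<beta> i then p (\<beta>(i := \<beta> i - 1)) else 0)
                else (\<lambda>_. 0))"

definition Yop :: "nat \<Rightarrow> nat \<Rightarrow> ('k::zero) op" where
  "Yop n i p = (if p \<in> Pn n then (\<lambda>\<beta>. p (\<beta>(i := Suc (\<beta> i)))) else (\<lambda>_. 0))"

definition Ei :: "nat \<Rightarrow> nat \<Rightarrow> nat \<Rightarrow> nat \<Rightarrow> ('k::ring) op" where
  "Ei n k l i = (\<lambda>p \<gamma>. (Xop n i ^^ k) ((Yop n i ^^ l) (Idop n p)) \<gamma>
                    - (Xop n i ^^ Suc k) ((Yop n i ^^ Suc l) (Idop n p)) \<gamma>)"

primrec Eaux :: "nat \<Rightarrow> (nat \<Rightarrow> nat) \<Rightarrow> (nat \<Rightarrow> nat) \<Rightarrow> nat \<Rightarrow> ('k::ring) op" where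
  "Eaux n \<alpha> \<beta> 0 = Idop n"
| "Eaux n \<alpha> \<beta> (Suc j) = Ei n (\<alpha> j) (\<beta> j) j \<circ> Eaux n \<alpha> \<beta> j"

definition E :: "nat \<Rightarrow> (nat \<Rightarrow> nat) \<Rightarrow> (nat \<Rightarrow> nat) \<Rightarrow> ('k::ring) op" where
  "E n \<alpha> \<beta> = Eaux n \<alpha> \<beta> n"

definition F :: "nat \<Rightarrow> ('k::field) op set" where
  "F n = {\<phi>. \<exists>S c. finite S \<and> (\<forall>s\<in>S. valid n (fst s) \<and> valid n (snd s))
            \<and> \<phi> = (\<lambda>p \<gamma>. \<Sum>s\<in>S. c s * E n (fst s) (snd s) p \<gamma>)}"

definition KplusF :: "nat \<Rightarrow> ('k::field) op set" where
  "KplusF n = {\<phi>. \<exists>c f. f \<in> F n \<and> \<phi> = (\<lambda>p \<gamma>. c * Idop n p \<gamma> + f p \<gamma>)}"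

definition comm :: "('k::ring) op \<Rightarrow> 'k op \<Rightarrow> 'k op" where
  "comm f g = (\<lambda>p \<gamma>. f (g p) \<gamma> - g (f p) \<gamma>)"

inductive_set Salg :: "nat \<Rightarrow> ('k::field) op set" for n where
  one: "Idop n \<in> Salg n"
| genx: "i < n \<Longrightarrow> Xop n i \<in> Salg n"
| geny: "i < n \<Longrightarrow> Yop n i \<in> Salg n"
| add: "f \<in> Salg n \<Longrightarrow> g \<in> Salg n \<Longrightarrow> (\<lambda>p \<gamma>. f p \<gamma> + g p \<gamma>) \<in> Salg n"
| smult: "f \<in> Salg n \<Longrightarrow> (\<lambda>p \<gamma>. c * f p \<gamma>) \<in> Salg n"
| comp: "f \<in> Salg n \<Longrightarrow> g \<in> Salg n \<Longrightarrow> f \<circ> g \<in> Salg n"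

end

theory Submission
  imports Defs
begin


definition mon :: "(nat \<Rightarrow> nat) \<Rightarrow> ('k::zero_neq_one) pol" where
  "mon \<delta> = (\<lambda>\<alpha>. if \<alpha> = \<delta> then 1 else 0)"

lemma Pn_zero[simp]: "(\<lambda>_. 0) \<in> Pn n"
  by (simp add: Pn_def)

lemma Pn_add: "(p::(_::field) pol) \<in> Pn n \<Longrightarrow> q \<in> Pn n \<Longrightarrow> (\<lambda>\<alpha>. p \<alpha> + q \<alpha>) \<in> Pn n"
proof -
  assume p: "p \<in> Pn n" and q: "q \<in> Pn n"
  have "{\<alpha>. p \<alpha> + q \<alpha> \<noteq> 0} \<subseteq> {\<alpha>. p \<alpha> \<noteq> 0} \<union> {\<alpha>. q \<alpha> \<noteq> 0}" by auto
  then show ?thesis using p q unfolding Pn_def by (auto intro: finite_subset)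
qed

lemma Pn_smult: "p \<in> Pn n \<Longrightarrow> (\<lambda>\<alpha>. (c::'k::field) * p \<alpha>) \<in> Pn n"
proof -
  assume p: "p \<in> Pn n"
  have "{\<alpha>. c * p \<alpha> \<noteq> 0} \<subseteq> {\<alpha>. p \<alpha> \<noteq> 0}" by auto
  then show ?thesis using p unfolding Pn_def by (auto intro: finite_subset)
qed

lemma Pn_mono: "valid n \<delta> \<Longrightarrow> mon \<delta> \<in> Pn n"
  unfolding Pn_def mon_def by auto

lemma mono_notin: "\<not> valid n \<delta> \<Longrightarrow> mon \<delta> \<notin> (Pn n :: ('k::zero_neq_one) pol set)"
  unfolding Pn_def mon_def by auto

lemma EndK_D:
  assumes "\<phi> \<in> EndK n"
  shows "\<And>p. p \<in> Pn n \<Longrightarrow> \<phi> p \<in> Pn n"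
    and "\<And>p q. p \<in> Pn n \<Longrightarrow> q \<in> Pn n \<Longrightarrow> \<phi> (\<lambda>\<alpha>. p \<alpha> + q \<alpha>) = (\<lambda>\<alpha>. \<phi> p \<alpha> + \<phi> q \<alpha>)"
    and "\<And>c p. p \<in> Pn n \<Longrightarrow> \<phi> (\<lambda>\<alpha>. c * p \<alpha>) = (\<lambda>\<alpha>. c * \<phi> p \<alpha>)"
    and "\<And>p. p \<notin> Pn n \<Longrightarrow> \<phi> p = (\<lambda>_. 0)"
  using assms unfolding EndK_def by auto

lemma EndK_Pn: "\<phi> \<in> EndK n \<Longrightarrow> \<phi> p \<in> Pn n"
  using EndK_D(1,4)[of \<phi> n p] by (cases "p \<in> Pn n") auto

lemma EndK_zero: "\<phi> \<in> EndK n \<Longrightarrow> \<phi> (\<lambda>_. 0) = (\<lambda>_. 0)"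
  using EndK_D(3)[of \<phi> n "\<lambda>_. 0" 0] by simp

lemma EndK_diff: "\<phi> \<in> EndK n \<Longrightarrow> p \<in> Pn n \<Longrightarrow> q \<in> Pn n \<Longrightarrow>
   \<phi> (\<lambda>\<alpha>. p \<alpha> - q \<alpha>) = (\<lambda>\<alpha>. \<phi> p \<alpha> - \<phi> q \<alpha>)"
proof -
  assume f: "\<phi> \<in> EndK n" and p: "p \<in> Pn n" and q: "q \<in> Pn n"
  have mq: "(\<lambda>\<alpha>. (-1) * q \<alpha>) \<in> Pn n" using Pn_smult[OF q] .
  have "(\<lambda>\<alpha>. p \<alpha> - q \<alpha>) = (\<lambda>\<alpha>. p \<alpha> + (\<lambda>\<alpha>. (-1) * q \<alpha>) \<alpha>)" by simp
  then have "\<phi> (\<lambda>\<alpha>. p \<alpha> - q \<alpha>) = (\<lambda>\<alpha>. \<phi> p \<alpha> + \<phi> (\<lambda>\<alpha>. (-1) * q \<alpha>) \<alpha>)"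
    using EndK_D(2)[OF f p mq] by simp
  also have "\<dots> = (\<lambda>\<alpha>. \<phi> p \<alpha> - \<phi> q \<alpha>)" using EndK_D(3)[OF f q, of "-1"] by simp
  finally show ?thesis .
qed

lemma EndK_I:
  assumes "\<And>p. p \<in> Pn n \<Longrightarrow> \<phi> p \<in> Pn n"
    and "\<And>p q. p \<in> Pn n \<Longrightarrow> q \<in> Pn n \<Longrightarrow> \<phi> (\<lambda>\<alpha>. p \<alpha> + q \<alpha>) = (\<lambda>\<alpha>. \<phi> p \<alpha> + \<phi> q \<alpha>)"
    and "\<And>c p. p \<in> Pn n \<Longrightarrow> \<phi> (\<lambda>\<alpha>. c * p \<alpha>) = (\<lambda>\<alpha>. c * \<phi> p \<alpha>)"
    and "\<And>p. p \<notin> Pn n \<Longrightarrow> \<phi> p = (\<lambda>_. 0)"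
  shows "\<phi> \<in> EndK n"
  using assms unfolding EndK_def by auto

lemma EndK_add: "f \<in> EndK n \<Longrightarrow> g \<in> EndK n \<Longrightarrow> (\<lambda>p \<gamma>. f p \<gamma> + g p \<gamma>) \<in> EndK n"
  apply (rule EndK_I)
  apply (simp add: EndK_Pn Pn_add)
  apply (simp add: EndK_D(2) algebra_simps)
  apply (simp add: EndK_D(3) algebra_simps)
  apply (simp add: EndK_D(4))
  done

lemma EndK_smult: "f \<in> EndK n \<Longrightarrow> (\<lambda>p \<gamma>. c * f p \<gamma>) \<in> EndK n"
  apply (rule EndK_I)
  apply (simp add: EndK_Pn Pn_smult)
  apply (simp add: EndK_D(2) algebra_simps)
  apply (simp add: EndK_D(3) algebra_simps)
  apply (simp add: EndK_D(4))
  done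

lemma EndK_comp: "f \<in> EndK n \<Longrightarrow> g \<in> EndK n \<Longrightarrow> f \<circ> g \<in> EndK n"
  apply (rule EndK_I)
  apply (simp add: EndK_Pn)
  apply (simp add: EndK_D(2) EndK_Pn)
  apply (simp add: EndK_D(3) EndK_Pn)
  apply (simp add: EndK_D(4) EndK_zero)
  done

lemma EndK_diff_op: "f \<in> EndK n \<Longrightarrow> g \<in> EndK n \<Longrightarrow> (\<lambda>p \<gamma>. f p \<gamma> - g p \<gamma>) \<in> EndK n"
proof -
  assume "f \<in> EndK n" "g \<in> EndK n"
  then have "(\<lambda>p \<gamma>. f p \<gamma> + (\<lambda>p \<gamma>. (-1) * g p \<gamma>) p \<gamma>) \<in> EndK n"
    by (intro EndK_add EndK_smult)
  then show ?thesis by simp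
qed

lemma EndK_comm: "f \<in> EndK n \<Longrightarrow> g \<in> EndK n \<Longrightarrow> comm f g \<in> EndK n"
  unfolding comm_def using EndK_diff_op[of "f \<circ> g" n "g \<circ> f"] EndK_comp by auto

lemma Idop_EndK: "Idop n \<in> EndK n"
  by (rule EndK_I) (auto simp: Idop_def Pn_add Pn_smult)


lemma valid_upd: "i < n \<Longrightarrow> valid n (\<beta>(i := k)) = valid n \<beta>"
  unfolding valid_def by auto

lemma Xop_EndK: assumes i: "i < n" shows "(Xop n i :: ('k::field) op) \<in> EndK n"
proof (rule EndK_I)
  fix p :: "'k pol" assume p: "p \<in> Pn n"
  let ?q = "Xop n i p"
  have q: "?q = (\<lambda>\<beta>. if 0 < \<beta> i then p (\<beta>(i := \<beta> i - 1)) else 0)" using p by (simp add: Xop_def)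
  have "{\<beta>. ?q \<beta> \<noteq> 0} \<subseteq> (\<lambda>\<alpha>. \<alpha>(i := Suc (\<alpha> i))) ` {\<alpha>. p \<alpha> \<noteq> 0}"
  proof
    fix \<beta> assume "\<beta> \<in> {\<beta>. ?q \<beta> \<noteq> 0}"
    then have "0 < \<beta> i" "p (\<beta>(i := \<beta> i - 1)) \<noteq> 0" by (auto simp: q split: if_splits)
    then show "\<beta> \<in> (\<lambda>\<alpha>. \<alpha>(i := Suc (\<alpha> i))) ` {\<alpha>. p \<alpha> \<noteq> 0}"
      by (intro image_eqI[of _ _ "\<beta>(i := \<beta> i - 1)"]) auto
  qed
  moreover have "\<forall>\<beta>. ?q \<beta> \<noteq> 0 \<longrightarrow> valid n \<beta>"
  proof (intro allI impI)
    fix \<beta> assume "?q \<beta> \<noteq> 0"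
    then have "p (\<beta>(i := \<beta> i - 1)) \<noteq> 0" by (auto simp: q split: if_splits)
    then have "valid n (\<beta>(i := \<beta> i - 1))" using p by (auto simp: Pn_def)
    then show "valid n \<beta>" using valid_upd[OF i] by simp
  qed
  ultimately show "?q \<in> Pn n" using p unfolding Pn_def by (auto intro: finite_subset)
next
  fix p q :: "'k pol" assume "p \<in> Pn n" "q \<in> Pn n"
  then show "Xop n i (\<lambda>\<alpha>. p \<alpha> + q \<alpha>) = (\<lambda>\<alpha>. Xop n i p \<alpha> + Xop n i q \<alpha>)"
    by (auto simp: Xop_def Pn_add)
next
  fix c and p :: "'k pol" assume "p \<in> Pn n"
  then show "Xop n i (\<lambda>\<alpha>. c * p \<alpha>) = (\<lambda>\<alpha>. c * Xop n i p \<alpha>)"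
    by (auto simp: Xop_def Pn_smult)
next
  fix p :: "'k pol" assume "p \<notin> Pn n" then show "Xop n i p = (\<lambda>_. 0)" by (simp add: Xop_def)
qed

lemma Yop_EndK: assumes i: "i < n" shows "(Yop n i :: ('k::field) op) \<in> EndK n"
proof (rule EndK_I)
  fix p :: "'k pol" assume p: "p \<in> Pn n"
  let ?q = "Yop n i p"
  have q: "?q = (\<lambda>\<beta>. p (\<beta>(i := Suc (\<beta> i))))" using p by (simp add: Yop_def)
  have "{\<beta>. ?q \<beta> \<noteq> 0} \<subseteq> (\<lambda>\<alpha>. \<alpha>(i := \<alpha> i - 1)) ` {\<alpha>. p \<alpha> \<noteq> 0}"
  proof
    fix \<beta> assume "\<beta> \<in> {\<beta>. ?q \<beta> \<noteq> 0}"
    then have "p (\<beta>(i := Suc (\<beta> i))) \<noteq> 0" by (auto simp: q)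
    then show "\<beta> \<in> (\<lambda>\<alpha>. \<alpha>(i := \<alpha> i - 1)) ` {\<alpha>. p \<alpha> \<noteq> 0}"
      by (intro image_eqI[of _ _ "\<beta>(i := Suc (\<beta> i))"]) auto
  qed
  moreover have "\<forall>\<beta>. ?q \<beta> \<noteq> 0 \<longrightarrow> valid n \<beta>"
  proof (intro allI impI)
    fix \<beta> assume "?q \<beta> \<noteq> 0"
    then have "p (\<beta>(i := Suc (\<beta> i))) \<noteq> 0" by (auto simp: q)
    then have "valid n (\<beta>(i := Suc (\<beta> i)))" using p by (auto simp: Pn_def)
    then show "valid n \<beta>" using valid_upd[OF i] by simp
  qed
  ultimately show "?q \<in> Pn n" using p unfolding Pn_def by (auto intro: finite_subset)
next
  fix p q :: "'k pol" assume "p \<in> Pn n" "q \<in> Pn n"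
  then show "Yop n i (\<lambda>\<alpha>. p \<alpha> + q \<alpha>) = (\<lambda>\<alpha>. Yop n i p \<alpha> + Yop n i q \<alpha>)"
    by (auto simp: Yop_def Pn_add)
next
  fix c and p :: "'k pol" assume "p \<in> Pn n"
  then show "Yop n i (\<lambda>\<alpha>. c * p \<alpha>) = (\<lambda>\<alpha>. c * Yop n i p \<alpha>)"
    by (auto simp: Yop_def Pn_smult)
next
  fix p :: "'k pol" assume "p \<notin> Pn n" then show "Yop n i p = (\<lambda>_. 0)" by (simp add: Yop_def)
qed

lemma Salg_EndK: "f \<in> Salg n \<Longrightarrow> f \<in> EndK n"
proof (induction rule: Salg.induct)
  case (comp f g) show ?case using comp.IH by (rule EndK_comp)
qed (auto intro: Idop_EndK Xop_EndK Yop_EndK EndK_add EndK_smult)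

lemma Xop_mono: "i < n \<Longrightarrow> valid n \<mu> \<Longrightarrow>
   Xop n i (mon \<mu>) = (mon (\<mu>(i := Suc (\<mu> i))) :: ('k::field) pol)"
  apply (simp add: Xop_def Pn_mono)
  apply (rule ext)
  apply (auto simp: mon_def fun_eq_iff)
  done

lemma Yop_mono: "i < n \<Longrightarrow> valid n \<mu> \<Longrightarrow>
   Yop n i (mon \<mu>) = (if 0 < \<mu> i then mon (\<mu>(i := \<mu> i - 1)) else (\<lambda>_. 0) :: ('k::field) pol)"
proof -
  assume i: "i < n" and v: "valid n \<mu>"
  have bf: "(\<beta>(i := Suc (\<beta> i)) = \<mu>) = (0 < \<mu> i \<and> \<beta> = \<mu>(i := \<mu> i - 1))" for \<beta>
    by (auto simp: fun_eq_iff split: if_splits)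
  have eq: "Yop n i (mon \<mu>) = (\<lambda>\<beta>. (mon \<mu> :: 'k pol) (\<beta>(i := Suc (\<beta> i))))"
    using Pn_mono[OF v] by (auto simp add: Yop_def)
  show ?thesis unfolding eq unfolding mon_def by (rule ext) (simp only: bf, auto)
qed

lemma Xop_zero[simp]: "Xop n i (\<lambda>_. 0) = (\<lambda>_. 0 :: ('k::field))"
  by (simp add: Xop_def)
lemma Yop_zero[simp]: "Yop n i (\<lambda>_. 0) = (\<lambda>_. 0 :: ('k::field))"
  by (simp add: Yop_def)
lemma Idop_mono: "valid n \<mu> \<Longrightarrow> Idop n (mon \<mu>) = (mon \<mu> :: ('k::field) pol)"
  by (simp add: Idop_def Pn_mono)
lemma Idop_zero[simp]: "Idop n (\<lambda>_. 0) = (\<lambda>_. 0 :: ('k::field))"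
  by (simp add: Idop_def)



lemma Xpow_mono: "i < n \<Longrightarrow> valid n \<mu> \<Longrightarrow>
   (Xop n i ^^ k) (mon \<mu>) = (mon (\<mu>(i := \<mu> i + k)) :: ('k::field) pol)"
proof (induction k)
  case 0 then show ?case by simp
next
  case (Suc k)
  have v: "valid n (\<mu>(i := \<mu> i + k))" using Suc.prems valid_upd by simp
  have "(Xop n i ^^ Suc k) (mon \<mu>) = Xop n i ((Xop n i ^^ k) (mon \<mu> :: 'k pol))" by simp
  also have "\<dots> = Xop n i (mon (\<mu>(i := \<mu> i + k)))" by (simp only: Suc.IH[OF Suc.prems])
  also have "\<dots> = mon ((\<mu>(i := \<mu> i + k))(i := Suc ((\<mu>(i := \<mu> i + k)) i)))"
    by (rule Xop_mono[OF Suc.prems(1) v])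
  also have "(\<mu>(i := \<mu> i + k))(i := Suc ((\<mu>(i := \<mu> i + k)) i)) = \<mu>(i := \<mu> i + Suc k)" by simp
  finally show ?case .
qed

lemma Xpow_zero[simp]: "(Xop n i ^^ k) (\<lambda>_. 0) = (\<lambda>_. 0 :: ('k::field))"
  by (induction k) auto
lemma Ypow_zero[simp]: "(Yop n i ^^ k) (\<lambda>_. 0) = (\<lambda>_. 0 :: ('k::field))"
  by (induction k) auto

lemma Ypow_mono: "i < n \<Longrightarrow> valid n \<mu> \<Longrightarrow>
   (Yop n i ^^ l) (mon \<mu>) = (if l \<le> \<mu> i then mon (\<mu>(i := \<mu> i - l)) else (\<lambda>_. 0) :: ('k::field) pol)"
proof (induction l)
  case 0 then show ?case by simp
next
  case (Suc l)
  have v: "valid n (\<mu>(i := \<mu> i - l))" using Suc.prems valid_upd by simp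
  show ?case
  proof (cases "l \<le> \<mu> i")
    case True
    have "(Yop n i ^^ Suc l) (mon \<mu>) = Yop n i ((Yop n i ^^ l) (mon \<mu> :: 'k pol))" by simp
    also have "\<dots> = Yop n i (mon (\<mu>(i := \<mu> i - l)))" using True by (simp only: Suc.IH[OF Suc.prems] if_True)
    also have "\<dots> = (if 0 < (\<mu>(i := \<mu> i - l)) i then mon ((\<mu>(i := \<mu> i - l))(i := (\<mu>(i := \<mu> i - l)) i - 1)) else (\<lambda>_. 0))"
      by (rule Yop_mono[OF Suc.prems(1) v])
    also have "\<dots> = (if Suc l \<le> \<mu> i then mon (\<mu>(i := \<mu> i - Suc l)) else (\<lambda>_. 0))"
    proof -
      have a1: "(0 < (\<mu>(i := \<mu> i - l)) i) = (Suc l \<le> \<mu> i)" using True by (simp add: Suc_le_eq)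
      have a2: "(\<mu>(i := \<mu> i - l))(i := (\<mu>(i := \<mu> i - l)) i - 1) = \<mu>(i := \<mu> i - Suc l)" by simp
      show ?thesis by (simp only: a1 a2)
    qed
    finally show ?thesis .
  next
    case False
    then show ?thesis using Suc by auto
  qed
qed

lemma Ei_mono: "i < n \<Longrightarrow> valid n \<mu> \<Longrightarrow>
  Ei n k l i (mon \<mu>) = (if \<mu> i = l then mon (\<mu>(i := k)) else (\<lambda>_. 0) :: ('k::field) pol)"
proof -
  assume i: "i < n" and v: "valid n \<mu>"
  have v1: "valid n (\<mu>(i := m))" for m using v valid_upd[OF i] by simp
  have y1: "(Yop n i ^^ l) (mon \<mu>) = (if l \<le> \<mu> i then mon (\<mu>(i := \<mu> i - l)) else (\<lambda>_. 0) :: 'k pol)"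
    by (rule Ypow_mono[OF i v])
  have y2: "(Yop n i ^^ Suc l) (mon \<mu>) = (if Suc l \<le> \<mu> i then mon (\<mu>(i := \<mu> i - Suc l)) else (\<lambda>_. 0) :: 'k pol)"
    by (rule Ypow_mono[OF i v])
  have x1: "(Xop n i ^^ k) (mon (\<mu>(i := m))) = (mon ((\<mu>(i := m))(i := (\<mu>(i := m)) i + k)) :: 'k pol)" for m
    by (rule Xpow_mono[OF i v1])
  have x2: "(Xop n i ^^ Suc k) (mon (\<mu>(i := m))) = (mon ((\<mu>(i := m))(i := (\<mu>(i := m)) i + Suc k)) :: 'k pol)" for m
    by (rule Xpow_mono[OF i v1])
  have e: "Ei n k l i (mon \<mu> :: 'k pol) = (\<lambda>\<gamma>. (Xop n i ^^ k) ((Yop n i ^^ l) (mon \<mu>)) \<gamma>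
                    - (Xop n i ^^ Suc k) ((Yop n i ^^ Suc l) (mon \<mu>)) \<gamma>)"
    by (simp only: Ei_def Idop_mono[OF v])
  show ?thesis
  proof (cases "\<mu> i = l")
    case True
    then show ?thesis unfolding e y1 y2 by (simp add: x1)
  next
    case False
    show ?thesis
    proof (cases "l < \<mu> i")
      case True
      then have le: "l \<le> \<mu> i" "Suc l \<le> \<mu> i" by auto
      have ar: "\<mu> i - Suc l + Suc k = \<mu> i - l + k" using le by arith
      show ?thesis unfolding e y1 y2
        by (simp only: le if_True False if_False x1 x2 fun_upd_upd fun_upd_same ar) (rule ext, simp only: diff_self)
    next
      case F2: False
      then have "\<not> l \<le> \<mu> i" "\<not> Suc l \<le> \<mu> i" using False by auto
      then show ?thesis unfolding e y1 y2 using False by (simp del: funpow.simps)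
    qed
  qed
qed

lemma Ei_zero[simp]: "Ei n k l i (\<lambda>_. 0) = (\<lambda>_. 0 :: ('k::field))"
  by (simp add: Ei_def)

lemma Eaux_mono: "j \<le> n \<Longrightarrow> valid n \<delta> \<Longrightarrow>
  Eaux n \<alpha> \<beta> j (mon \<delta>) = (if \<forall>i<j. \<delta> i = \<beta> i then mon (\<lambda>i. if i < j then \<alpha> i else \<delta> i)
     else (\<lambda>_. 0) :: ('k::field) pol)"
proof (induction j)
  case 0 then show ?case by (simp add: Idop_mono)
next
  case (Suc j)
  let ?\<nu> = "\<lambda>i. if i < j then \<alpha> i else \<delta> i"
  have j: "j < n" using Suc by simp
  have v: "valid n ?\<nu>" using Suc.prems j unfolding valid_def by auto
  have eq: "?\<nu>(j := \<alpha> j) = (\<lambda>i. if i < Suc j then \<alpha> i else \<delta> i)" by (auto simp: fun_eq_iff)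
  have all: "(\<forall>i<Suc j. \<delta> i = \<beta> i) = ((\<forall>i<j. \<delta> i = \<beta> i) \<and> \<delta> j = \<beta> j)" using less_Suc_eq by auto
  have nj: "?\<nu> j = \<delta> j" by simp
  have s: "Eaux n \<alpha> \<beta> (Suc j) (mon \<delta>) = Ei n (\<alpha> j) (\<beta> j) j (Eaux n \<alpha> \<beta> j (mon \<delta> :: 'k pol))" by simp
  show ?case
  proof (cases "\<forall>i<j. \<delta> i = \<beta> i")
    case True
    then have "Eaux n \<alpha> \<beta> (Suc j) (mon \<delta>) = Ei n (\<alpha> j) (\<beta> j) j (mon ?\<nu> :: 'k pol)"
      unfolding s using Suc by simp
    also have "\<dots> = (if ?\<nu> j = \<beta> j then mon (?\<nu>(j := \<alpha> j)) else (\<lambda>_. 0))"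
      by (rule Ei_mono[OF j v])
    finally have c: "Eaux n \<alpha> \<beta> (Suc j) (mon \<delta>) = (if \<delta> j = \<beta> j then mon (\<lambda>i. if i < Suc j then \<alpha> i else \<delta> i) else (\<lambda>_. 0) :: 'k pol)"
      unfolding nj eq .
    have tt: "(\<forall>i<j. \<delta> i = \<beta> i) = True" using True by (simp only: simp_thms)
    show ?thesis unfolding c all tt by (simp only: simp_thms)
  next
    case False
    have ih: "Eaux n \<alpha> \<beta> j (mon \<delta>) = (if \<forall>i<j. \<delta> i = \<beta> i then mon ?\<nu> else (\<lambda>_. 0) :: 'k pol)"
      using Suc.IH Suc.prems by simp
    have "Eaux n \<alpha> \<beta> (Suc j) (mon \<delta>) = Ei n (\<alpha> j) (\<beta> j) j ((\<lambda>_. 0) :: 'k pol)"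
      unfolding s ih using False by (simp only: if_False)
    then have z: "Eaux n \<alpha> \<beta> (Suc j) (mon \<delta>) = ((\<lambda>_. 0) :: 'k pol)" by (simp only: Ei_zero)
    have nf: "\<not> (\<forall>i<Suc j. \<delta> i = \<beta> i)" using False less_SucI by blast
    show ?thesis unfolding z using nf by (simp only: if_False)
  qed
qed

lemma valid_eq: "valid n a \<Longrightarrow> valid n b \<Longrightarrow> (\<forall>i<n. a i = b i) = (a = b)"
proof
  assume v: "valid n a" "valid n b" and h: "\<forall>i<n. a i = b i"
  show "a = b"
  proof
    fix i show "a i = b i" using v h unfolding valid_def by (cases "i < n") auto
  qed
qed simp

lemma E_mono: "valid n \<alpha> \<Longrightarrow> valid n \<beta> \<Longrightarrow> valid n \<delta> \<Longrightarrow>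
  E n \<alpha> \<beta> (mon \<delta>) = (if \<delta> = \<beta> then mon \<alpha> else (\<lambda>_. 0) :: ('k::field) pol)"
proof -
  assume a: "valid n \<alpha>" and b: "valid n \<beta>" and d: "valid n \<delta>"
  have aeq: "(\<lambda>i. if i < n then \<alpha> i else \<delta> i) = \<alpha>" 
  proof
    fix i show "(if i < n then \<alpha> i else \<delta> i) = \<alpha> i"
      using a d unfolding valid_def by (cases "i < n") auto
  qed
  have "Eaux n \<alpha> \<beta> n (mon \<delta>) = (if \<forall>i<n. \<delta> i = \<beta> i then mon (\<lambda>i. if i < n then \<alpha> i else \<delta> i)
     else (\<lambda>_. 0) :: 'k pol)" by (rule Eaux_mono[OF le_refl d])
  then show ?thesis unfolding E_def valid_eq[OF d b] aeq .
qed



definition supp :: "('k::zero) pol \<Rightarrow> (nat \<Rightarrow> nat) set" where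
  "supp p = {\<alpha>. p \<alpha> \<noteq> 0}"

lemma lin_comb:
  fixes \<phi> :: "('k::field) op"
  assumes f: "\<phi> \<in> EndK n" and A: "finite A" "\<forall>\<delta>\<in>A. valid n \<delta>"
  shows "(\<lambda>\<alpha>. \<Sum>\<delta>\<in>A. c \<delta> * mon \<delta> \<alpha>) \<in> Pn n \<and>
         \<phi> (\<lambda>\<alpha>. \<Sum>\<delta>\<in>A. c \<delta> * mon \<delta> \<alpha>) = (\<lambda>\<gamma>. \<Sum>\<delta>\<in>A. c \<delta> * \<phi> (mon \<delta>) \<gamma>)"
  using A
proof (induction A rule: finite_induct)
  case empty
  then show ?case using EndK_zero[OF f] by simp
next
  case (insert x A)
  let ?q = "\<lambda>\<alpha>. \<Sum>\<delta>\<in>A. c \<delta> * mon \<delta> \<alpha>"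
  have q: "?q \<in> Pn n" "\<phi> ?q = (\<lambda>\<gamma>. \<Sum>\<delta>\<in>A. c \<delta> * \<phi> (mon \<delta>) \<gamma>)" using insert by auto
  have m: "(\<lambda>\<alpha>. c x * mon x \<alpha>) \<in> Pn n" by (intro Pn_smult Pn_mono) (simp add: insert)
  have eq: "(\<lambda>\<alpha>. \<Sum>\<delta>\<in>insert x A. c \<delta> * mon \<delta> \<alpha>) = (\<lambda>\<alpha>. (\<lambda>\<alpha>. c x * mon x \<alpha>) \<alpha> + ?q \<alpha>)"
    using insert by simp
  have 1: "(\<lambda>\<alpha>. \<Sum>\<delta>\<in>insert x A. c \<delta> * mon \<delta> \<alpha>) \<in> Pn n" unfolding eq by (rule Pn_add[OF m q(1)])
  have "\<phi> (\<lambda>\<alpha>. \<Sum>\<delta>\<in>insert x A. c \<delta> * mon \<delta> \<alpha>) = (\<lambda>\<gamma>. \<phi> (\<lambda>\<alpha>. c x * mon x \<alpha>) \<gamma> + \<phi> ?q \<gamma>)"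
    unfolding eq by (rule EndK_D(2)[OF f m q(1)])
  also have "\<dots> = (\<lambda>\<gamma>. c x * \<phi> (mon x) \<gamma> + (\<Sum>\<delta>\<in>A. c \<delta> * \<phi> (mon \<delta>) \<gamma>))"
    using EndK_D(3)[OF f Pn_mono[of n x], of "c x"] insert q(2) by simp
  also have "\<dots> = (\<lambda>\<gamma>. \<Sum>\<delta>\<in>insert x A. c \<delta> * \<phi> (mon \<delta>) \<gamma>)" using insert by simp
  finally show ?case using 1 by simp
qed

lemma poly_expand:
  fixes p :: "('k::field) pol"
  assumes "p \<in> Pn n"
  shows "p = (\<lambda>\<alpha>. \<Sum>\<delta>\<in>supp p. p \<delta> * mon \<delta> \<alpha>)"
proof
  fix \<alpha>
  have fin: "finite (supp p)" using assms by (simp add: Pn_def supp_def)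
  have "(\<Sum>\<delta>\<in>supp p. p \<delta> * mon \<delta> \<alpha>) = (\<Sum>\<delta>\<in>supp p. if \<delta> = \<alpha> then p \<alpha> else 0)"
    by (rule sum.cong) (auto simp: mon_def)
  also have "\<dots> = p \<alpha>" using fin by (simp add: supp_def)
  finally show "p \<alpha> = (\<Sum>\<delta>\<in>supp p. p \<delta> * mon \<delta> \<alpha>)" by simp
qed

lemma supp_valid: "p \<in> Pn n \<Longrightarrow> \<forall>\<delta>\<in>supp p. valid n \<delta>"
  by (auto simp: Pn_def supp_def)
lemma supp_finite: "p \<in> Pn n \<Longrightarrow> finite (supp p)"
  by (auto simp: Pn_def supp_def)

lemma EndK_expand:
  fixes \<phi> :: "('k::field) op"
  assumes f: "\<phi> \<in> EndK n" and p: "p \<in> Pn n"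
  shows "\<phi> p = (\<lambda>\<gamma>. \<Sum>\<delta>\<in>supp p. p \<delta> * \<phi> (mon \<delta>) \<gamma>)"
proof -
  have "\<phi> p = \<phi> (\<lambda>\<alpha>. \<Sum>\<delta>\<in>supp p. p \<delta> * mon \<delta> \<alpha>)" using poly_expand[OF p] by simp
  also have "\<dots> = (\<lambda>\<gamma>. \<Sum>\<delta>\<in>supp p. p \<delta> * \<phi> (mon \<delta>) \<gamma>)"
    using lin_comb[OF f supp_finite[OF p] supp_valid[OF p]] by blast
  finally show ?thesis .
qed

lemma EndK_ext:
  fixes \<phi> \<psi> :: "('k::field) op"
  assumes f: "\<phi> \<in> EndK n" and g: "\<psi> \<in> EndK n"
    and eq: "\<And>\<delta>. valid n \<delta> \<Longrightarrow> \<phi> (mon \<delta>) = \<psi> (mon \<delta>)"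
  shows "\<phi> = \<psi>"
proof
  fix p
  show "\<phi> p = \<psi> p"
  proof (cases "p \<in> Pn n")
    case True
    have "\<phi> p = (\<lambda>\<gamma>. \<Sum>\<delta>\<in>supp p. p \<delta> * \<phi> (mon \<delta>) \<gamma>)" by (rule EndK_expand[OF f True])
    also have "\<dots> = (\<lambda>\<gamma>. \<Sum>\<delta>\<in>supp p. p \<delta> * \<psi> (mon \<delta>) \<gamma>)"
      using eq supp_valid[OF True] by simp
    also have "\<dots> = \<psi> p" by (rule EndK_expand[OF g True, symmetric])
    finally show ?thesis .
  next
    case False
    then show ?thesis using EndK_D(4)[OF f] EndK_D(4)[OF g] by simp
  qed
qed

lemma Salg_sum:
  assumes "finite S" "\<forall>s\<in>S. h s \<in> Salg n"
  shows "(\<lambda>p \<gamma>. \<Sum>s\<in>S. (c s :: 'k::field) * h s p \<gamma>) \<in> Salg n"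
  using assms
proof (induction S rule: finite_induct)
  case empty
  have "(\<lambda>p \<gamma>. (0::'k) * Idop n p \<gamma>) \<in> Salg n" by (intro Salg.smult Salg.one)
  then show ?case by simp
next
  case (insert x S)
  have "(\<lambda>p \<gamma>. (\<lambda>p \<gamma>. c x * h x p \<gamma>) p \<gamma> + (\<lambda>p \<gamma>. \<Sum>s\<in>S. c s * h s p \<gamma>) p \<gamma>) \<in> Salg n"
    using insert by (intro Salg.add Salg.smult) auto
  then show ?case using insert by simp
qed

lemma Salg_Xpow: "i < n \<Longrightarrow> g \<in> Salg n \<Longrightarrow> (Xop n i ^^ k) \<circ> g \<in> Salg n"
proof (induction k)
  case 0 then show ?case by simp
next
  case (Suc k)
  have "Xop n i \<circ> ((Xop n i ^^ k) \<circ> g) \<in> Salg n" by (rule Salg.comp[OF Salg.genx[OF Suc.prems(1)] Suc.IH[OF Suc.prems]])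
  then show ?case by (simp add: comp_def)
qed

lemma Salg_Ypow: "i < n \<Longrightarrow> g \<in> Salg n \<Longrightarrow> (Yop n i ^^ k) \<circ> g \<in> Salg n"
proof (induction k)
  case 0 then show ?case by simp
next
  case (Suc k)
  have "Yop n i \<circ> ((Yop n i ^^ k) \<circ> g) \<in> Salg n" by (rule Salg.comp[OF Salg.geny[OF Suc.prems(1)] Suc.IH[OF Suc.prems]])
  then show ?case by (simp add: comp_def)
qed

lemma Ei_Salg: assumes i: "i < n" shows "(Ei n k l i :: ('k::field) op) \<in> Salg n"
proof -
  let ?A = "(Xop n i ^^ k) \<circ> ((Yop n i ^^ l) \<circ> Idop n) :: 'k op"
  let ?B = "(Xop n i ^^ Suc k) \<circ> ((Yop n i ^^ Suc l) \<circ> Idop n) :: 'k op"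
  have A: "?A \<in> Salg n" using i by (intro Salg_Xpow Salg_Ypow Salg.one)
  have B: "?B \<in> Salg n" using i by (intro Salg_Xpow Salg_Ypow Salg.one)
  have "(\<lambda>p \<gamma>. ?A p \<gamma> + (\<lambda>p \<gamma>. (-1) * ?B p \<gamma>) p \<gamma>) \<in> Salg n"
    using A B by (intro Salg.add Salg.smult)
  moreover have "(\<lambda>p \<gamma>. ?A p \<gamma> + (\<lambda>p \<gamma>. (-1) * ?B p \<gamma>) p \<gamma>) = Ei n k l i"
    unfolding Ei_def comp_apply by (intro ext) simp
  ultimately show ?thesis by simp
qed

lemma Eaux_Salg: "j \<le> n \<Longrightarrow> Eaux n \<alpha> \<beta> j \<in> Salg n"
proof (induction j)
  case 0 then show ?case by (simp add: Salg.one)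
next
  case (Suc j)
  have "j < n" using Suc by simp
  then show ?case using Salg.comp[OF Ei_Salg[of j n "\<alpha> j" "\<beta> j"] Suc.IH] Suc by (simp add: comp_def)
qed

lemma E_Salg: "E n \<alpha> \<beta> \<in> Salg n"
  unfolding E_def by (rule Eaux_Salg) simp

lemma F_Salg: "f \<in> F n \<Longrightarrow> f \<in> Salg n"
  unfolding F_def by (auto intro!: Salg_sum E_Salg)

lemma F_EndK: "f \<in> F n \<Longrightarrow> f \<in> EndK n"
  using F_Salg Salg_EndK by blast



definition finsupp :: "nat \<Rightarrow> ('k::field) op \<Rightarrow> bool" where
  "finsupp n f = (\<exists>S. finite S \<and> (\<forall>\<delta> \<gamma>. valid n \<delta> \<longrightarrow> f (mon \<delta>) \<gamma> \<noteq> 0 \<longrightarrow> (\<gamma>, \<delta>) \<in> S))"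

lemma finsuppI: "finite S \<Longrightarrow> (\<And>\<delta> \<gamma>. valid n \<delta> \<Longrightarrow> f (mon \<delta>) \<gamma> \<noteq> 0 \<Longrightarrow> (\<gamma>, \<delta>) \<in> S) \<Longrightarrow> finsupp n f"
  unfolding finsupp_def by blast

lemma finsuppE:
  assumes "finsupp n f"
  obtains S where "finite S" "\<And>\<delta> \<gamma>. valid n \<delta> \<Longrightarrow> f (mon \<delta>) \<gamma> \<noteq> 0 \<Longrightarrow> (\<gamma>, \<delta>) \<in> S"
  using assms unfolding finsupp_def by blast

lemma F_finsupp: assumes "f \<in> F n" shows "finsupp n (f :: ('k::field) op)"
proof -
  obtain S c where S: "finite S" "\<forall>s\<in>S. valid n (fst s) \<and> valid n (snd s)"
    and f: "f = (\<lambda>p \<gamma>. \<Sum>s\<in>S. c s * E n (fst s) (snd s) p \<gamma>)"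
    using assms unfolding F_def by blast
  show ?thesis
  proof (rule finsuppI[OF S(1)])
    fix \<delta> \<gamma> assume d: "valid n \<delta>" and nz: "f (mon \<delta>) \<gamma> \<noteq> 0"
    have "f (mon \<delta>) \<gamma> = (\<Sum>s\<in>S. c s * E n (fst s) (snd s) (mon \<delta>) \<gamma>)" using f by simp
    also have "\<dots> = (\<Sum>s\<in>S. c s * (if \<delta> = snd s then mon (fst s) \<gamma> else 0))"
    proof (rule sum.cong[OF refl])
      fix s assume "s \<in> S"
      then have "valid n (fst s)" "valid n (snd s)" using S(2) by auto
      then have e: "E n (fst s) (snd s) (mon \<delta>) = (if \<delta> = snd s then mon (fst s) else (\<lambda>_. 0) :: 'k pol)"
        by (rule E_mono[OF _ _ d])
      show "c s * E n (fst s) (snd s) (mon \<delta>) \<gamma> = c s * (if \<delta> = snd s then mon (fst s) \<gamma> else 0)"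
        unfolding e by simp
    qed
    finally have "(\<Sum>s\<in>S. c s * (if \<delta> = snd s then mon (fst s) \<gamma> else 0)) \<noteq> 0" using nz by simp
    then obtain s where "s \<in> S" "c s * (if \<delta> = snd s then mon (fst s) \<gamma> else 0) \<noteq> 0"
      using sum.not_neutral_contains_not_neutral by blast
    then have "s \<in> S" "\<delta> = snd s" "\<gamma> = fst s" by (auto simp: mon_def split: if_splits)
    then show "(\<gamma>, \<delta>) \<in> S" by simp
  qed
qed

lemma finsupp_F:
  assumes fE: "f \<in> EndK n" and fs: "finsupp n (f :: ('k::field) op)"
  shows "f \<in> F n"
proof -
  obtain S where S: "finite S" "\<And>\<delta> \<gamma>. valid n \<delta> \<Longrightarrow> f (mon \<delta>) \<gamma> \<noteq> 0 \<Longrightarrow> (\<gamma>, \<delta>) \<in> S"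
    using fs unfolding finsupp_def by blast
  define S' where "S' = {s\<in>S. valid n (fst s) \<and> valid n (snd s)}"
  have S': "finite S'" "\<forall>s\<in>S'. valid n (fst s) \<and> valid n (snd s)" using S(1) by (auto simp: S'_def)
  define g where "g = (\<lambda>p \<gamma>. \<Sum>s\<in>S'. f (mon (snd s)) (fst s) * E n (fst s) (snd s) p \<gamma>)"
  have gF: "g \<in> F n" unfolding F_def g_def
    by (rule CollectI, rule exI[of _ S'], rule exI[of _ "\<lambda>s. f (mon (snd s)) (fst s)"]) (simp add: S')
  have "f = g"
  proof (rule EndK_ext[OF fE F_EndK[OF gF]])
    fix \<delta> :: "nat \<Rightarrow> nat" assume d: "valid n \<delta>"
    show "f (mon \<delta>) = g (mon \<delta>)"
    proof
      fix \<gamma>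
      have "g (mon \<delta>) \<gamma> = (\<Sum>s\<in>S'. f (mon (snd s)) (fst s) * E n (fst s) (snd s) (mon \<delta>) \<gamma>)"
        by (simp add: g_def)
      also have "\<dots> = (\<Sum>s\<in>S'. if s = (\<gamma>, \<delta>) then f (mon \<delta>) \<gamma> else 0)"
      proof (rule sum.cong[OF refl])
        fix s assume "s \<in> S'"
        then have "valid n (fst s)" "valid n (snd s)" using S'(2) by auto
        then have e: "E n (fst s) (snd s) (mon \<delta>) = (if \<delta> = snd s then mon (fst s) else (\<lambda>_. 0) :: 'k pol)"
          by (rule E_mono[OF _ _ d])
        show "f (mon (snd s)) (fst s) * E n (fst s) (snd s) (mon \<delta>) \<gamma> = (if s = (\<gamma>, \<delta>) then f (mon \<delta>) \<gamma> else 0)"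
          unfolding e by (cases s) (auto simp: mon_def)
      qed
      also have "\<dots> = (if (\<gamma>, \<delta>) \<in> S' then f (mon \<delta>) \<gamma> else 0)"
        using S'(1) by simp
      also have "\<dots> = f (mon \<delta>) \<gamma>"
      proof (cases "f (mon \<delta>) \<gamma> = 0")
        case False
        have "f (mon \<delta>) \<in> Pn n" using EndK_Pn[OF fE] .
        then have "valid n \<gamma>" using False by (auto simp: Pn_def)
        then have "(\<gamma>, \<delta>) \<in> S'" using S(2)[OF d False] d by (simp add: S'_def)
        then show ?thesis by simp
      qed simp
      finally show "f (mon \<delta>) \<gamma> = g (mon \<delta>) \<gamma>" by simp
    qed
  qed
  then show ?thesis using gF by simp
qed

lemma F_char: "f \<in> F n \<longleftrightarrow> f \<in> EndK n \<and> finsupp n (f :: ('k::field) op)"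
  using F_EndK F_finsupp finsupp_F by blast

lemma finsupp_add: "finsupp n f \<Longrightarrow> finsupp n g \<Longrightarrow> finsupp n (\<lambda>p \<gamma>. f p \<gamma> + g p \<gamma>)"
proof -
  assume "finsupp n f" "finsupp n g"
  then obtain S T where S: "finite S" "\<And>\<delta> \<gamma>. valid n \<delta> \<Longrightarrow> f (mon \<delta>) \<gamma> \<noteq> 0 \<Longrightarrow> (\<gamma>, \<delta>) \<in> S"
    and T: "finite T" "\<And>\<delta> \<gamma>. valid n \<delta> \<Longrightarrow> g (mon \<delta>) \<gamma> \<noteq> 0 \<Longrightarrow> (\<gamma>, \<delta>) \<in> T"
    by (metis finsuppE)
  show ?thesis
  proof (rule finsuppI[of "S \<union> T"])
    show "finite (S \<union> T)" using S T by simp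
  next
    fix \<delta> \<gamma> assume d: "valid n \<delta>" and nz: "f (mon \<delta>) \<gamma> + g (mon \<delta>) \<gamma> \<noteq> 0"
    then have "f (mon \<delta>) \<gamma> \<noteq> 0 \<or> g (mon \<delta>) \<gamma> \<noteq> 0" by auto
    then show "(\<gamma>, \<delta>) \<in> S \<union> T" using S(2)[OF d] T(2)[OF d] by blast
  qed
qed

lemma finsupp_smult: "finsupp n f \<Longrightarrow> finsupp n (\<lambda>p \<gamma>. c * f p \<gamma>)"
proof -
  assume "finsupp n f"
  then obtain S where S: "finite S" "\<And>\<delta> \<gamma>. valid n \<delta> \<Longrightarrow> f (mon \<delta>) \<gamma> \<noteq> 0 \<Longrightarrow> (\<gamma>, \<delta>) \<in> S"
    by (metis finsuppE)
  show ?thesis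
  proof (rule finsuppI[of S])
    fix \<delta> \<gamma> assume d: "valid n \<delta>" and nz: "c * f (mon \<delta>) \<gamma> \<noteq> 0"
    then have "f (mon \<delta>) \<gamma> \<noteq> 0" by auto
    then show "(\<gamma>, \<delta>) \<in> S" using S(2)[OF d] by blast
  qed (rule S(1))
qed

lemma finsupp_diff: "finsupp n f \<Longrightarrow> finsupp n g \<Longrightarrow> finsupp n (\<lambda>p \<gamma>. f p \<gamma> - g p \<gamma>)"
proof -
  assume "finsupp n f" "finsupp n g"
  then have "finsupp n (\<lambda>p \<gamma>. f p \<gamma> + (\<lambda>p \<gamma>. (-1) * g p \<gamma>) p \<gamma>)"
    by (intro finsupp_add finsupp_smult)
  then show ?thesis by simp
qed

lemma finsupp_lcomp:
  assumes h: "h \<in> EndK n" and f: "f \<in> EndK n" and fs: "finsupp n f"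
  shows "finsupp n (\<lambda>p. h (f p))"
proof -
  obtain S where S: "finite S" "\<And>\<delta> \<gamma>. valid n \<delta> \<Longrightarrow> f (mon \<delta>) \<gamma> \<noteq> 0 \<Longrightarrow> (\<gamma>, \<delta>) \<in> S"
    using fs unfolding finsupp_def by blast
  let ?T = "\<Union>s\<in>S. (\<lambda>\<gamma>. (\<gamma>, snd s)) ` supp (h (mon (fst s)))"
  show ?thesis
  proof (rule finsuppI[of ?T])
    show "finite ?T" using S(1) supp_finite[OF EndK_Pn[OF h]] by (intro finite_UN_I finite_imageI)
  next
    fix \<delta> \<gamma> assume d: "valid n \<delta>" and nz: "h (f (mon \<delta>)) \<gamma> \<noteq> 0"
    have fP: "f (mon \<delta>) \<in> Pn n" by (rule EndK_Pn[OF f])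
    have "h (f (mon \<delta>)) \<gamma> = (\<Sum>\<eta>\<in>supp (f (mon \<delta>)). f (mon \<delta>) \<eta> * h (mon \<eta>) \<gamma>)"
      using EndK_expand[OF h fP] by simp
    then have "(\<Sum>\<eta>\<in>supp (f (mon \<delta>)). f (mon \<delta>) \<eta> * h (mon \<eta>) \<gamma>) \<noteq> 0" using nz by simp
    then obtain \<eta> where "\<eta> \<in> supp (f (mon \<delta>))" "f (mon \<delta>) \<eta> * h (mon \<eta>) \<gamma> \<noteq> 0"
      by (rule sum.not_neutral_contains_not_neutral)
    then have e1: "(\<eta>, \<delta>) \<in> S" and e2: "\<gamma> \<in> supp (h (mon \<eta>))" using S(2)[OF d] by (auto simp: supp_def)
    show "(\<gamma>, \<delta>) \<in> ?T" using e1 e2 by (intro UN_I[of "(\<eta>, \<delta>)"] imageI) auto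
  qed
qed

lemma Idop_apply: "f \<in> EndK n \<Longrightarrow> f (Idop n p) = f p"
  by (simp add: Idop_def EndK_D(4) EndK_zero)

lemma finsupp_rcomp:
  assumes g: "g \<in> Salg n"
  shows "f \<in> EndK n \<Longrightarrow> finsupp n f \<Longrightarrow> finsupp n (f \<circ> g)"
  using g
proof (induction arbitrary: f rule: Salg.induct)
  case one
  then show ?case by (simp add: Idop_apply comp_def)
next
  case (genx i)
  obtain S where S: "finite S" "\<And>\<delta> \<gamma>. valid n \<delta> \<Longrightarrow> f (mon \<delta>) \<gamma> \<noteq> 0 \<Longrightarrow> (\<gamma>, \<delta>) \<in> S"
    using genx.prems(2) unfolding finsupp_def by blast
  show ?case
  proof (rule finsuppI[of "(\<lambda>(a, b). (a, b(i := b i - 1))) ` S"])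
    show "finite ((\<lambda>(a, b). (a, b(i := b i - 1))) ` S)" using S(1) by simp
  next
    fix \<delta> \<gamma> assume d: "valid n \<delta>" and nz: "(f \<circ> Xop n i) (mon \<delta>) \<gamma> \<noteq> 0"
    have d': "valid n (\<delta>(i := Suc (\<delta> i)))" using d valid_upd[OF genx.hyps] by simp
    have "f (mon (\<delta>(i := Suc (\<delta> i)))) \<gamma> \<noteq> 0" using nz by (simp add: Xop_mono[OF genx.hyps d])
    then have "(\<gamma>, \<delta>(i := Suc (\<delta> i))) \<in> S" by (rule S(2)[OF d'])
    then show "(\<gamma>, \<delta>) \<in> (\<lambda>(a, b). (a, b(i := b i - 1))) ` S"
    proof (rule rev_image_eqI)
      show "(\<gamma>, \<delta>) = (\<lambda>(a, b). (a, b(i := b i - 1))) (\<gamma>, \<delta>(i := Suc (\<delta> i)))" by simp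
    qed
  qed
next
  case (geny i)
  obtain S where S: "finite S" "\<And>\<delta> \<gamma>. valid n \<delta> \<Longrightarrow> f (mon \<delta>) \<gamma> \<noteq> 0 \<Longrightarrow> (\<gamma>, \<delta>) \<in> S"
    using geny.prems(2) unfolding finsupp_def by blast
  show ?case
  proof (rule finsuppI[of "(\<lambda>(a, b). (a, b(i := Suc (b i)))) ` S"])
    show "finite ((\<lambda>(a, b). (a, b(i := Suc (b i)))) ` S)" using S(1) by simp
  next
    fix \<delta> \<gamma> assume d: "valid n \<delta>" and nz: "(f \<circ> Yop n i) (mon \<delta>) \<gamma> \<noteq> 0"
    have d': "valid n (\<delta>(i := \<delta> i - 1))" using d valid_upd[OF geny.hyps] by simp
    have pos: "0 < \<delta> i" and "f (mon (\<delta>(i := \<delta> i - 1))) \<gamma> \<noteq> 0"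
      using nz by (auto simp add: Yop_mono[OF geny.hyps d] EndK_zero[OF geny.prems(1)] split: if_splits)
    then have "(\<gamma>, \<delta>(i := \<delta> i - 1)) \<in> S" using S(2)[OF d'] by simp
    then show "(\<gamma>, \<delta>) \<in> (\<lambda>(a, b). (a, b(i := Suc (b i)))) ` S"
    proof (rule rev_image_eqI)
      have "(\<delta>(i := \<delta> i - 1))(i := Suc (\<delta> i - 1)) = \<delta>" using pos by (simp add: fun_eq_iff)
      then show "(\<gamma>, \<delta>) = (\<lambda>(a, b). (a, b(i := Suc (b i)))) (\<gamma>, \<delta>(i := \<delta> i - 1))" by simp
    qed
  qed
next
  case (add g h)
  have gE: "g \<in> EndK n" and hE: "h \<in> EndK n" using add.hyps Salg_EndK by auto
  have eq: "f \<circ> (\<lambda>p \<gamma>. g p \<gamma> + h p \<gamma>) = (\<lambda>p \<gamma>. (f \<circ> g) p \<gamma> + (f \<circ> h) p \<gamma>)"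
  proof (intro ext)
    fix p \<gamma>
    show "(f \<circ> (\<lambda>p \<gamma>. g p \<gamma> + h p \<gamma>)) p \<gamma> = (f \<circ> g) p \<gamma> + (f \<circ> h) p \<gamma>"
      using EndK_D(2)[OF add.prems(1) EndK_Pn[OF gE] EndK_Pn[OF hE], of p p] by simp
  qed
  show ?case unfolding eq by (rule finsupp_add[OF add.IH(1)[OF add.prems] add.IH(2)[OF add.prems]])
next
  case (smult g c)
  have gE: "g \<in> EndK n" using smult.hyps Salg_EndK by auto
  have eq: "f \<circ> (\<lambda>p \<gamma>. c * g p \<gamma>) = (\<lambda>p \<gamma>. c * (f \<circ> g) p \<gamma>)"
  proof (intro ext)
    fix p \<gamma>
    show "(f \<circ> (\<lambda>p \<gamma>. c * g p \<gamma>)) p \<gamma> = c * (f \<circ> g) p \<gamma>"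
      using EndK_D(3)[OF smult.prems(1) EndK_Pn[OF gE], of c p] by simp
  qed
  show ?case unfolding eq by (rule finsupp_smult[OF smult.IH[OF smult.prems]])
next
  case (comp g h)
  have gE: "g \<in> EndK n" using comp.hyps Salg_EndK by auto
  have "finsupp n (f \<circ> g)" by (rule comp.IH(1)[OF comp.prems])
  moreover have "f \<circ> g \<in> EndK n" using EndK_comp[OF comp.prems(1) gE] .
  ultimately have "finsupp n ((f \<circ> g) \<circ> h)" by (rule comp.IH(2)[rotated])
  then show ?case by (simp only: comp_assoc)
qed



lemma comm_X_mon:
  fixes \<phi> :: "('k::field) op"
  assumes f: "\<phi> \<in> EndK n" and i: "i < n" and d: "valid n \<delta>"
  shows "comm (Xop n i) \<phi> (mon \<delta>) \<gamma> = (if 0 < \<gamma> i then \<phi> (mon \<delta>) (\<gamma>(i := \<gamma> i - 1)) else 0)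
           - \<phi> (mon (\<delta>(i := Suc (\<delta> i)))) (\<gamma> :: nat \<Rightarrow> nat) "
proof -
  have "\<phi> (mon \<delta>) \<in> Pn n" by (rule EndK_Pn[OF f])
  then have "Xop n i (\<phi> (mon \<delta>)) \<gamma> = (if 0 < \<gamma> i then \<phi> (mon \<delta>) (\<gamma>(i := \<gamma> i - 1)) else 0)"
    by (simp add: Xop_def)
  moreover have "\<phi> (Xop n i (mon \<delta>)) = \<phi> (mon (\<delta>(i := Suc (\<delta> i))))" by (simp add: Xop_mono[OF i d])
  ultimately show ?thesis unfolding comm_def by simp
qed

lemma comm_Y_mon:
  fixes \<phi> :: "('k::field) op"
  assumes f: "\<phi> \<in> EndK n" and i: "i < n" and d: "valid n \<delta>"
  shows "comm (Yop n i) \<phi> (mon \<delta>) \<gamma> = \<phi> (mon \<delta>) (\<gamma>(i := Suc (\<gamma> i)))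
           - (if 0 < \<delta> i then \<phi> (mon (\<delta>(i := \<delta> i - 1))) \<gamma> else 0)"
proof -
  have "\<phi> (mon \<delta>) \<in> Pn n" by (rule EndK_Pn[OF f])
  then have "Yop n i (\<phi> (mon \<delta>)) \<gamma> = \<phi> (mon \<delta>) (\<gamma>(i := Suc (\<gamma> i)))"
    by (simp add: Yop_def)
  moreover have "\<phi> (Yop n i (mon \<delta>)) \<gamma> = (if 0 < \<delta> i then \<phi> (mon (\<delta>(i := \<delta> i - 1))) \<gamma> else 0)"
    by (simp add: Yop_mono[OF i d] EndK_zero[OF f])
  ultimately show ?thesis unfolding comm_def by simp
qed

lemma comm_add:
  fixes A f g :: "('k::field) op"
  assumes A: "A \<in> EndK n" and f: "f \<in> EndK n" and g: "g \<in> EndK n"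
  shows "comm A (\<lambda>p \<gamma>. f p \<gamma> + g p \<gamma>) = (\<lambda>p \<gamma>. comm A f p \<gamma> + comm A g p \<gamma>)"
proof (intro ext)
  fix p \<gamma>
  have "A (\<lambda>\<gamma>. f p \<gamma> + g p \<gamma>) = (\<lambda>\<gamma>. A (f p) \<gamma> + A (g p) \<gamma>)"
    by (rule EndK_D(2)[OF A EndK_Pn[OF f] EndK_Pn[OF g]])
  then show "comm A (\<lambda>p \<gamma>. f p \<gamma> + g p \<gamma>) p \<gamma> = comm A f p \<gamma> + comm A g p \<gamma>"
    unfolding comm_def by simp
qed

lemma comm_smult:
  fixes A f g :: "('k::field) op"
  assumes A: "A \<in> EndK n" and f: "f \<in> EndK n"
  shows "comm A (\<lambda>p \<gamma>. c * f p \<gamma>) = (\<lambda>p \<gamma>. c * comm A f p \<gamma>)"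
proof (intro ext)
  fix p \<gamma>
  have "A (\<lambda>\<gamma>. c * f p \<gamma>) = (\<lambda>\<gamma>. c * A (f p) \<gamma>)"
    by (rule EndK_D(3)[OF A EndK_Pn[OF f]])
  then show "comm A (\<lambda>p \<gamma>. c * f p \<gamma>) p \<gamma> = c * comm A f p \<gamma>"
    unfolding comm_def by (simp add: algebra_simps)
qed

lemma comm_comp:
  fixes A f g :: "('k::field) op"
  assumes A: "A \<in> EndK n" and f: "f \<in> EndK n" and g: "g \<in> EndK n"
  shows "comm A (f \<circ> g) = (\<lambda>p \<gamma>. (comm A f \<circ> g) p \<gamma> + (f \<circ> comm A g) p \<gamma>)"
proof (intro ext)
  fix p \<gamma>
  have "f (\<lambda>\<gamma>. A (g p) \<gamma> - g (A p) \<gamma>) = (\<lambda>\<gamma>. f (A (g p)) \<gamma> - f (g (A p)) \<gamma>)"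
    by (rule EndK_diff[OF f EndK_Pn[OF A] EndK_Pn[OF g]])
  then show "comm A (f \<circ> g) p \<gamma> = (comm A f \<circ> g) p \<gamma> + (f \<circ> comm A g) p \<gamma>"
    unfolding comm_def by simp
qed

lemma comm_Id: fixes A :: "('k::field) op" assumes A: "A \<in> EndK n" shows "comm A (Idop n) = (\<lambda>p \<gamma>. 0)"
proof (intro ext)
  fix p \<gamma>
  have "Idop n (A p) = A p" using EndK_Pn[OF A] by (simp add: Idop_def)
  moreover have "A (Idop n p) = A p" by (rule Idop_apply[OF A])
  ultimately show "comm A (Idop n) p \<gamma> = 0" unfolding comm_def by simp
qed

lemma finsupp_zero: "finsupp n (\<lambda>p \<gamma>. 0)"
  by (rule finsuppI[of "{}"]) auto

lemma comm_self: "comm f f = (\<lambda>p \<gamma>. 0)"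
  unfolding comm_def by simp

lemma comm_Salg:
  fixes A :: "('k::field) op"
  assumes A: "A \<in> EndK n"
    and gx: "\<And>i. i < n \<Longrightarrow> finsupp n (comm A (Xop n i))"
    and gy: "\<And>i. i < n \<Longrightarrow> finsupp n (comm A (Yop n i))"
    and \<phi>: "\<phi> \<in> Salg n"
  shows "finsupp n (comm A \<phi>)"
  using \<phi>
proof (induction rule: Salg.induct)
  case one
  then show ?case unfolding comm_Id[OF A] by (rule finsupp_zero)
next
  case (genx i) then show ?case by (rule gx)
next
  case (geny i) then show ?case by (rule gy)
next
  case (add f g)
  have "f \<in> EndK n" "g \<in> EndK n" using add.hyps Salg_EndK by auto
  show ?case unfolding comm_add[OF A \<open>f \<in> EndK n\<close> \<open>g \<in> EndK n\<close>]
    by (rule finsupp_add[OF add.IH])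
next
  case (smult f c)
  have "f \<in> EndK n" using smult.hyps Salg_EndK by auto
  show ?case unfolding comm_smult[OF A \<open>f \<in> EndK n\<close>]
    by (rule finsupp_smult[OF smult.IH])
next
  case (comp f g)
  have fE: "f \<in> EndK n" and gE: "g \<in> EndK n" using comp.hyps Salg_EndK by auto
  have 1: "finsupp n (comm A f \<circ> g)"
    by (rule finsupp_rcomp[OF comp.hyps(2) EndK_comm[OF A fE] comp.IH(1)])
  have 2: "finsupp n (\<lambda>p. f (comm A g p))"
    by (rule finsupp_lcomp[OF fE EndK_comm[OF A gE] comp.IH(2)])
  have "finsupp n (\<lambda>p \<gamma>. (comm A f \<circ> g) p \<gamma> + (f \<circ> comm A g) p \<gamma>)"
    using finsupp_add[OF 1 2] by (simp add: comp_def)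
  then show ?case unfolding comm_comp[OF A fE gE] .
qed

lemma comm_F:
  fixes A :: "('k::field) op"
  assumes A: "A \<in> Salg n" and f: "f \<in> F n"
  shows "comm A f \<in> F n"
proof -
  have AE: "A \<in> EndK n" using A Salg_EndK by auto
  have fE: "f \<in> EndK n" and fs: "finsupp n f" using f F_char by auto
  have 1: "finsupp n (\<lambda>p. A (f p))" by (rule finsupp_lcomp[OF AE fE fs])
  have 2: "finsupp n (f \<circ> A)" by (rule finsupp_rcomp[OF A fE fs])
  have "finsupp n (\<lambda>p \<gamma>. (\<lambda>p. A (f p)) p \<gamma> - (f \<circ> A) p \<gamma>)" by (rule finsupp_diff[OF 1 2])
  then have "finsupp n (comm A f)" unfolding comm_def by (simp add: comp_def)
  then show ?thesis using F_char EndK_comm[OF AE fE] by auto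
qed



lemma KplusF_sub:
  assumes "\<phi> \<in> KplusF n"
  shows "\<phi> \<in> (EndK n :: ('k::field) op set) \<and> (\<forall>i<n. comm (Xop n i) \<phi> \<in> F n \<and> comm (Yop n i) \<phi> \<in> F n)"
proof -
  obtain c f where f: "f \<in> F n" and \<phi>: "\<phi> = (\<lambda>p \<gamma>. c * Idop n p \<gamma> + f p \<gamma>)"
    using assms unfolding KplusF_def by blast
  have fE: "f \<in> EndK n" using F_EndK[OF f] .
  have cI: "(\<lambda>p \<gamma>. c * Idop n p \<gamma>) \<in> EndK n" by (intro EndK_smult Idop_EndK)
  have E: "\<phi> \<in> EndK n" unfolding \<phi> using EndK_add[OF cI fE] by simp
  have key: "comm A \<phi> = comm A f" if A: "A \<in> Salg n" for A :: "'k op"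
  proof -
    have AE: "A \<in> EndK n" using A Salg_EndK by auto
    have "comm A \<phi> = comm A (\<lambda>p \<gamma>. (\<lambda>p \<gamma>. c * Idop n p \<gamma>) p \<gamma> + f p \<gamma>)" unfolding \<phi> by simp
    also have "\<dots> = (\<lambda>p \<gamma>. comm A (\<lambda>p \<gamma>. c * Idop n p \<gamma>) p \<gamma> + comm A f p \<gamma>)"
      by (rule comm_add[OF AE cI fE])
    also have "comm A (\<lambda>p \<gamma>. c * Idop n p \<gamma>) = (\<lambda>p \<gamma>. c * comm A (Idop n) p \<gamma>)"
      by (rule comm_smult[OF AE Idop_EndK])
    finally show ?thesis unfolding comm_Id[OF AE] by simp
  qed
  show ?thesis
  proof (intro conjI allI impI)
    show "\<phi> \<in> EndK n" by (rule E)
  next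
    fix i assume "i < n"
    then show "comm (Xop n i) \<phi> \<in> F n" using key[OF Salg.genx] comm_F[OF Salg.genx f] by simp
  next
    fix i assume "i < n"
    then show "comm (Yop n i) \<phi> \<in> F n" using key[OF Salg.geny] comm_F[OF Salg.geny f] by simp
  qed
qed

lemma XY_mon: "i < n \<Longrightarrow> valid n \<delta> \<Longrightarrow>
  Xop n i (Yop n i (mon \<delta>)) = (if 0 < \<delta> i then mon \<delta> else (\<lambda>_. 0) :: ('k::field) pol)"
proof -
  assume i: "i < n" and d: "valid n \<delta>"
  show ?thesis
  proof (cases "0 < \<delta> i")
    case True
    have d': "valid n (\<delta>(i := \<delta> i - 1))" using d valid_upd[OF i] by simp
    have e: "(\<delta>(i := \<delta> i - 1))(i := Suc ((\<delta>(i := \<delta> i - 1)) i)) = \<delta>" using True by (auto simp: fun_eq_iff)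
    have "Yop n i (mon \<delta>) = (mon (\<delta>(i := \<delta> i - 1)) :: 'k pol)" using True by (simp add: Yop_mono[OF i d])
    then have "Xop n i (Yop n i (mon \<delta>)) = (Xop n i (mon (\<delta>(i := \<delta> i - 1))) :: 'k pol)" by simp
    also have "\<dots> = mon ((\<delta>(i := \<delta> i - 1))(i := Suc ((\<delta>(i := \<delta> i - 1)) i)))" by (rule Xop_mono[OF i d'])
    also have "\<dots> = mon \<delta>" by (simp only: e)
    finally show ?thesis using True by simp
  next
    case False
    then show ?thesis by (simp add: Yop_mono[OF i d])
  qed
qed

lemma YX_mon: "i < n \<Longrightarrow> valid n \<delta> \<Longrightarrow>
  Yop n i (Xop n i (mon \<delta>)) = (mon \<delta> :: ('k::field) pol)"
proof -
  assume i: "i < n" and d: "valid n \<delta>"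
  have d': "valid n (\<delta>(i := Suc (\<delta> i)))" using d valid_upd[OF i] by simp
  have e: "(\<delta>(i := Suc (\<delta> i)))(i := (\<delta>(i := Suc (\<delta> i))) i - 1) = \<delta>" by (auto simp: fun_eq_iff)
  show ?thesis by (simp add: Xop_mono[OF i d] Yop_mono[OF i d'] e)
qed

lemma valid1: "valid 1 \<delta> \<Longrightarrow> \<delta> 0 = 0 \<Longrightarrow> \<delta> = (\<lambda>_. 0)"
proof
  fix x assume v: "valid 1 \<delta>" and z: "\<delta> 0 = 0"
  show "\<delta> x = 0" using v z unfolding valid_def by (cases x) auto
qed

lemma finsupp_XY1: "finsupp 1 (comm (Xop 1 0) (Yop 1 0) :: ('k::field) op)"
proof (rule finsuppI[of "{((\<lambda>_. 0), (\<lambda>_. 0))}"])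
  fix \<delta> \<gamma> assume d: "valid 1 \<delta>" and nz: "comm (Xop 1 0) (Yop 1 0) (mon \<delta>) \<gamma> \<noteq> (0::'k)"
  have "comm (Xop 1 0) (Yop 1 0) (mon \<delta>) \<gamma> = (if 0 < \<delta> 0 then mon \<delta> \<gamma> else 0) - (mon \<delta> \<gamma> :: 'k)"
    unfolding comm_def XY_mon[OF zero_less_one d] YX_mon[OF zero_less_one d] by simp
  then have "\<delta> 0 = 0" "\<gamma> = \<delta>" using nz by (auto simp: mon_def split: if_splits)
  then show "(\<gamma>, \<delta>) \<in> {((\<lambda>_. 0), (\<lambda>_. 0))}" using valid1[OF d] by simp
qed simp

lemma finsupp_YX1: "finsupp 1 (comm (Yop 1 0) (Xop 1 0) :: ('k::field) op)"
proof (rule finsuppI[of "{((\<lambda>_. 0), (\<lambda>_. 0))}"])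
  fix \<delta> \<gamma> assume d: "valid 1 \<delta>" and nz: "comm (Yop 1 0) (Xop 1 0) (mon \<delta>) \<gamma> \<noteq> (0::'k)"
  have "comm (Yop 1 0) (Xop 1 0) (mon \<delta>) \<gamma> = (mon \<delta> \<gamma> :: 'k) - (if 0 < \<delta> 0 then mon \<delta> \<gamma> else 0)"
    unfolding comm_def XY_mon[OF zero_less_one d] YX_mon[OF zero_less_one d] by simp
  then have "\<delta> 0 = 0" "\<gamma> = \<delta>" using nz by (auto simp: mon_def split: if_splits)
  then show "(\<gamma>, \<delta>) \<in> {((\<lambda>_. 0), (\<lambda>_. 0))}" using valid1[OF d] by simp
qed simp

lemma Salg1_sub:
  assumes "\<phi> \<in> Salg 1"
  shows "\<phi> \<in> (EndK 1 :: ('k::field) op set) \<and> (\<forall>i<1. comm (Xop 1 i) \<phi> \<in> F 1 \<and> comm (Yop 1 i) \<phi> \<in> F 1)"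
proof -
  have XE: "(Xop 1 0 :: 'k op) \<in> EndK 1" and YE: "(Yop 1 0 :: 'k op) \<in> EndK 1" by (auto intro: Xop_EndK Yop_EndK)
  have \<phi>E: "\<phi> \<in> EndK 1" using assms Salg_EndK by auto
  have fx: "finsupp 1 (comm (Xop 1 0) \<phi>)"
  proof (rule comm_Salg[OF XE _ _ assms])
    fix i :: nat assume "i < 1" then have i0: "i = 0" by simp
    show "finsupp 1 (comm (Xop 1 0) (Xop 1 i))" unfolding i0 comm_self by (rule finsupp_zero)
    show "finsupp 1 (comm (Xop 1 0) (Yop 1 i))" unfolding i0 by (rule finsupp_XY1)
  qed
  have fy: "finsupp 1 (comm (Yop 1 0) \<phi>)"
  proof (rule comm_Salg[OF YE _ _ assms])
    fix i :: nat assume "i < 1" then have i0: "i = 0" by simp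
    show "finsupp 1 (comm (Yop 1 0) (Yop 1 i))" unfolding i0 comm_self by (rule finsupp_zero)
    show "finsupp 1 (comm (Yop 1 0) (Xop 1 i))" unfolding i0 by (rule finsupp_YX1)
  qed
  show ?thesis using fx fy \<phi>E EndK_comm[OF XE \<phi>E] EndK_comm[OF YE \<phi>E] F_char by auto
qed



definition dg :: "nat \<Rightarrow> (nat \<Rightarrow> nat) \<Rightarrow> nat" where
  "dg n a = (\<Sum>j<n. a j)"

lemma dg_upd: "i < n \<Longrightarrow> dg n (a(i := k)) + a i = dg n a + k"
proof -
  assume i: "i < n"
  have "dg n (a(i := k)) = k + (\<Sum>j\<in>{..<n} - {i}. (a(i := k)) j)"
    unfolding dg_def using i by (simp add: sum.remove)
  also have "(\<Sum>j\<in>{..<n} - {i}. (a(i := k)) j) = (\<Sum>j\<in>{..<n} - {i}. a j)" by (rule sum.cong) auto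
  finally have 1: "dg n (a(i := k)) = k + (\<Sum>j\<in>{..<n} - {i}. a j)" .
  have 2: "dg n a = a i + (\<Sum>j\<in>{..<n} - {i}. a j)" unfolding dg_def using i by (simp add: sum.remove)
  show ?thesis using 1 2 by simp
qed

lemma dg_Suc: "i < n \<Longrightarrow> dg n (a(i := Suc (a i))) = Suc (dg n a)"
  using dg_upd[of i n a "Suc (a i)"] by simp

lemma dg_add: "i < n \<Longrightarrow> dg n (a(i := a i + t)) = dg n a + t"
  using dg_upd[of i n a "a i + t"] by simp

lemma dg_pred: "i < n \<Longrightarrow> 0 < a i \<Longrightarrow> Suc (dg n (a(i := a i - 1))) = dg n a"
  using dg_upd[of i n a "a i - 1"] by simp

lemma valid_le_cases:
  assumes "valid n a" "valid n b" "\<forall>j. a j \<le> b j"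
  shows "a = b \<or> (\<exists>j<n. a j < b j)"
proof (cases "\<exists>j<n. a j < b j")
  case False
  then have "\<forall>j<n. a j = b j" using assms(3) by (metis le_neq_implies_less)
  then show ?thesis using valid_eq[OF assms(1,2)] by simp
qed simp

lemma dg_strict:
  assumes "\<forall>j. a j \<le> b j" "j < n" "a j < b j"
  shows "dg n a < dg n b"
  unfolding dg_def by (rule sum_strict_mono_ex1) (use assms in auto)

lemma dg_mono:
  assumes "\<forall>j. a j \<le> b j"
  shows "dg n a \<le> dg n b"
  unfolding dg_def by (rule sum_mono) (use assms in auto)

context
  fixes n :: nat and \<phi> :: "('k::field) op" and T :: nat
  assumes \<phi>E: "\<phi> \<in> EndK n"
    and bnd: "\<And>i \<delta> \<gamma>. i < n \<Longrightarrow> valid n \<delta> \<Longrightarrow> T \<le> dg n \<gamma> + dg n \<delta> \<Longrightarrow>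
       comm (Xop n i) \<phi> (mon \<delta>) \<gamma> = 0 \<and> comm (Yop n i) \<phi> (mon \<delta>) \<gamma> = 0"
begin

lemma stepA:
  assumes i: "i < n" and g: "valid n \<gamma>" and d: "valid n \<delta>" and T: "T \<le> dg n \<gamma> + dg n \<delta>"
  shows "\<phi> (mon (\<delta>(i := Suc (\<delta> i)))) (\<gamma>(i := Suc (\<gamma> i))) = \<phi> (mon \<delta>) \<gamma>"
proof -
  let ?g = "\<gamma>(i := Suc (\<gamma> i))"
  have T': "T \<le> dg n ?g + dg n \<delta>" using T dg_Suc[OF i, of \<gamma>] by simp
  have "comm (Xop n i) \<phi> (mon \<delta>) ?g = 0" using bnd[OF i d T'] by simp
  moreover have "comm (Xop n i) \<phi> (mon \<delta>) ?g = \<phi> (mon \<delta>) \<gamma> - \<phi> (mon (\<delta>(i := Suc (\<delta> i)))) ?g"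
    using comm_X_mon[OF \<phi>E i d, of ?g] by simp
  ultimately show ?thesis by simp
qed

lemma stepB1:
  assumes i: "i < n" and d: "valid n \<delta>" and T: "T \<le> dg n \<gamma> + dg n \<delta>" and z: "\<gamma> i = 0"
  shows "\<phi> (mon (\<delta>(i := Suc (\<delta> i)))) \<gamma> = 0"
proof -
  have "comm (Xop n i) \<phi> (mon \<delta>) \<gamma> = 0" using bnd[OF i d T] by simp
  moreover have "comm (Xop n i) \<phi> (mon \<delta>) \<gamma> = - \<phi> (mon (\<delta>(i := Suc (\<delta> i)))) \<gamma>"
    using comm_X_mon[OF \<phi>E i d, of \<gamma>] z by simp
  ultimately show ?thesis by simp
qed

lemma stepB2:
  assumes i: "i < n" and d: "valid n \<delta>" and T: "T \<le> dg n \<gamma> + dg n \<delta>" and z: "\<delta> i = 0"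
  shows "\<phi> (mon \<delta>) (\<gamma>(i := Suc (\<gamma> i))) = 0"
proof -
  have "comm (Yop n i) \<phi> (mon \<delta>) \<gamma> = 0" using bnd[OF i d T] by simp
  moreover have "comm (Yop n i) \<phi> (mon \<delta>) \<gamma> = \<phi> (mon \<delta>) (\<gamma>(i := Suc (\<gamma> i)))"
    using comm_Y_mon[OF \<phi>E i d, of \<gamma>] z by simp
  ultimately show ?thesis by simp
qed

lemma iterA:
  assumes i: "i < n" and g: "valid n \<gamma>" and d: "valid n \<delta>" and T: "T \<le> dg n \<gamma> + dg n \<delta>"
  shows "\<phi> (mon (\<delta>(i := \<delta> i + t))) (\<gamma>(i := \<gamma> i + t)) = \<phi> (mon \<delta>) \<gamma>"
proof (induction t)
  case 0 then show ?case by simp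
next
  case (Suc t)
  let ?g = "\<gamma>(i := \<gamma> i + t)" and ?d = "\<delta>(i := \<delta> i + t)"
  have vg: "valid n ?g" and vd: "valid n ?d" using g d valid_upd[OF i] by auto
  have T': "T \<le> dg n ?g + dg n ?d" using T dg_add[OF i] by simp
  have A: "\<phi> (mon (?d(i := Suc (?d i)))) (?g(i := Suc (?g i))) = \<phi> (mon ?d) ?g"
    by (rule stepA[OF i vg vd T'])
  have e1: "\<delta>(i := \<delta> i + Suc t) = ?d(i := Suc (?d i))" and e2: "\<gamma>(i := \<gamma> i + Suc t) = ?g(i := Suc (?g i))"
    by simp_all
  show ?case unfolding e1 e2 using A Suc.IH by (rule trans)
qed

lemma diag_aux:
  assumes nu: "valid n \<nu>"
  shows "\<forall>\<gamma>. valid n \<gamma> \<longrightarrow> (\<forall>j. \<gamma> j \<le> \<nu> j) \<longrightarrow> dg n \<nu> - dg n \<gamma> = d \<longrightarrow> T \<le> 2 * dg n \<gamma> \<longrightarrow>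
     \<phi> (mon \<nu>) \<nu> = \<phi> (mon \<gamma>) \<gamma>"
proof (induction d)
  case 0
  show ?case
  proof (intro allI impI)
    fix \<gamma> assume g: "valid n \<gamma>" and le: "\<forall>j. \<gamma> j \<le> \<nu> j" and e: "dg n \<nu> - dg n \<gamma> = 0"
    have "\<gamma> = \<nu>"
    proof (rule ccontr)
      assume "\<gamma> \<noteq> \<nu>"
      then obtain j where "j < n" "\<gamma> j < \<nu> j" using valid_le_cases[OF g nu le] by auto
      then have "dg n \<gamma> < dg n \<nu>" using dg_strict le by blast
      then show False using e by simp
    qed
    then show "\<phi> (mon \<nu>) \<nu> = \<phi> (mon \<gamma>) \<gamma>" by simp
  qed
next
  case (Suc d)
  show ?case
  proof (intro allI impI)
    fix \<gamma> assume g: "valid n \<gamma>" and le: "\<forall>j. \<gamma> j \<le> \<nu> j" and e: "dg n \<nu> - dg n \<gamma> = Suc d"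
      and T: "T \<le> 2 * dg n \<gamma>"
    have "\<gamma> \<noteq> \<nu>" using e by auto
    then obtain j where j: "j < n" "\<gamma> j < \<nu> j" using valid_le_cases[OF g nu le] by auto
    let ?g = "\<gamma>(j := Suc (\<gamma> j))"
    have vg: "valid n ?g" using g valid_upd[OF j(1)] by simp
    have le': "\<forall>i. ?g i \<le> \<nu> i" using le j by auto
    have dgg: "dg n ?g = Suc (dg n \<gamma>)" by (rule dg_Suc[OF j(1)])
    have e': "dg n \<nu> - dg n ?g = d" using e dgg by simp
    have T': "T \<le> 2 * dg n ?g" using T dgg by simp
    have "\<phi> (mon \<nu>) \<nu> = \<phi> (mon ?g) ?g" using Suc.IH vg le' e' T' by blast
    also have "\<dots> = \<phi> (mon \<gamma>) \<gamma>" by (rule stepA[OF j(1) g g]) (use T in simp)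
    finally show "\<phi> (mon \<nu>) \<nu> = \<phi> (mon \<gamma>) \<gamma>" .
  qed
qed

lemma diag:
  assumes g: "valid n \<gamma>" and g': "valid n \<gamma>'" and T: "T \<le> 2 * dg n \<gamma>" and T': "T \<le> 2 * dg n \<gamma>'"
  shows "\<phi> (mon \<gamma>) \<gamma> = \<phi> (mon \<gamma>') \<gamma>'"
proof -
  let ?\<nu> = "\<lambda>j. max (\<gamma> j) (\<gamma>' j)"
  have nu: "valid n ?\<nu>" using g g' unfolding valid_def by auto
  have "\<phi> (mon ?\<nu>) ?\<nu> = \<phi> (mon \<gamma>) \<gamma>" using diag_aux[OF nu] g T by auto
  moreover have "\<phi> (mon ?\<nu>) ?\<nu> = \<phi> (mon \<gamma>') \<gamma>'" using diag_aux[OF nu] g' T' by auto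
  ultimately show ?thesis by simp
qed

lemma offdiag_aux:
  assumes n2: "2 \<le> n" and i: "i < n"
  shows "\<forall>\<gamma> \<delta>. valid n \<gamma> \<longrightarrow> valid n \<delta> \<longrightarrow> Suc T \<le> dg n \<gamma> + dg n \<delta> \<longrightarrow> \<gamma> i \<noteq> \<delta> i \<longrightarrow>
     min (\<gamma> i) (\<delta> i) = m \<longrightarrow> \<phi> (mon \<delta>) \<gamma> = 0"
proof (induction m)
  case 0
  show ?case
  proof (intro allI impI)
    fix \<gamma> \<delta> assume g: "valid n \<gamma>" and d: "valid n \<delta>" and T: "Suc T \<le> dg n \<gamma> + dg n \<delta>"
      and ne: "\<gamma> i \<noteq> \<delta> i" and m: "min (\<gamma> i) (\<delta> i) = 0"
    show "\<phi> (mon \<delta>) \<gamma> = 0"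
    proof (cases "\<gamma> i = 0")
      case True
      then have pos: "0 < \<delta> i" using ne by simp
      let ?d = "\<delta>(i := \<delta> i - 1)"
      have vd: "valid n ?d" using d valid_upd[OF i] by simp
      have T': "T \<le> dg n \<gamma> + dg n ?d" using T dg_pred[of i n \<delta>, OF i pos] by simp
      have eq: "?d(i := Suc (?d i)) = \<delta>" using pos by (auto simp: fun_eq_iff)
      show ?thesis using stepB1[OF i vd T' True] unfolding eq .
    next
      case False
      then have z: "\<delta> i = 0" and pos: "0 < \<gamma> i" using m by auto
      let ?g = "\<gamma>(i := \<gamma> i - 1)"
      have T': "T \<le> dg n ?g + dg n \<delta>" using T dg_pred[of i n \<gamma>, OF i pos] by simp
      have eq: "?g(i := Suc (?g i)) = \<gamma>" using pos by (auto simp: fun_eq_iff)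
      show ?thesis using stepB2[OF i d T' z] unfolding eq .
    qed
  qed
next
  case (Suc m)
  show ?case
  proof (intro allI impI)
    fix \<gamma> \<delta> assume g: "valid n \<gamma>" and d: "valid n \<delta>" and T: "Suc T \<le> dg n \<gamma> + dg n \<delta>"
      and ne: "\<gamma> i \<noteq> \<delta> i" and m: "min (\<gamma> i) (\<delta> i) = Suc m"
    define j :: nat where "j = (if i = 0 then 1 else 0)"
    have j: "j < n" "j \<noteq> i" using n2 i by (auto simp: j_def)
    have pg: "0 < \<gamma> i" and pd: "0 < \<delta> i" using m by auto
    define g1 where "g1 = (\<gamma>(i := \<gamma> i - 1))(j := Suc (\<gamma> j))"
    define d1 where "d1 = (\<delta>(i := \<delta> i - 1))(j := Suc (\<delta> j))"
    have vg1: "valid n g1" unfolding g1_def using g valid_upd[OF i] valid_upd[OF j(1)] by simp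
    have vd1: "valid n d1" unfolding d1_def using d valid_upd[OF i] valid_upd[OF j(1)] by simp
    have dg1: "dg n g1 = dg n \<gamma>"
    proof -
      have "dg n g1 = Suc (dg n (\<gamma>(i := \<gamma> i - 1)))" unfolding g1_def using dg_Suc[OF j(1), of "\<gamma>(i := \<gamma> i - 1)"] j by simp
      then show ?thesis using dg_pred[of i n \<gamma>, OF i pg] by simp
    qed
    have dd1: "dg n d1 = dg n \<delta>"
    proof -
      have "dg n d1 = Suc (dg n (\<delta>(i := \<delta> i - 1)))" unfolding d1_def using dg_Suc[OF j(1), of "\<delta>(i := \<delta> i - 1)"] j by simp
      then show ?thesis using dg_pred[of i n \<delta>, OF i pd] by simp
    qed
    have eg: "g1(i := Suc (g1 i)) = \<gamma>(j := Suc (\<gamma> j))" unfolding g1_def using j pg by (auto simp: fun_eq_iff)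
    have ed: "d1(i := Suc (d1 i)) = \<delta>(j := Suc (\<delta> j))" unfolding d1_def using j pd by (auto simp: fun_eq_iff)
    have "\<phi> (mon \<delta>) \<gamma> = \<phi> (mon (\<delta>(j := Suc (\<delta> j)))) (\<gamma>(j := Suc (\<gamma> j)))"
      by (rule stepA[OF j(1) g d, symmetric]) (use T in simp)
    also have "\<dots> = \<phi> (mon d1) g1"
      unfolding eg[symmetric] ed[symmetric] by (rule stepA[OF i vg1 vd1]) (use T dg1 dd1 in simp)
    also have "\<dots> = 0"
    proof -
      have "g1 i = \<gamma> i - 1" "d1 i = \<delta> i - 1" unfolding g1_def d1_def using j by auto
      then have "g1 i \<noteq> d1 i" "min (g1 i) (d1 i) = m" using ne m pg pd by auto
      then show ?thesis using Suc.IH vg1 vd1 T dg1 dd1 by auto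
    qed
    finally show "\<phi> (mon \<delta>) \<gamma> = 0" .
  qed
qed

lemma offdiag:
  assumes "2 \<le> n" "i < n" "valid n \<gamma>" "valid n \<delta>" "Suc T \<le> dg n \<gamma> + dg n \<delta>" "\<gamma> i \<noteq> \<delta> i"
  shows "\<phi> (mon \<delta>) \<gamma> = 0"
  using offdiag_aux[OF assms(1,2)] assms(3-6) by blast

end



lemma exists_T:
  fixes \<phi> :: "('k::field) op"
  assumes hyp: "\<forall>i<n. comm (Xop n i) \<phi> \<in> F n \<and> comm (Yop n i) \<phi> \<in> F n"
  shows "\<exists>T. \<forall>i \<delta> \<gamma>. i < n \<longrightarrow> valid n \<delta> \<longrightarrow> T \<le> dg n \<gamma> + dg n \<delta> \<longrightarrow>
       comm (Xop n i) \<phi> (mon \<delta>) \<gamma> = 0 \<and> comm (Yop n i) \<phi> (mon \<delta>) \<gamma> = 0"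
proof -
  have "\<forall>i\<in>{..<n}. \<exists>S. finite S \<and> (\<forall>\<delta> \<gamma>. valid n \<delta> \<longrightarrow>
      (comm (Xop n i) \<phi> (mon \<delta>) \<gamma> \<noteq> 0 \<or> comm (Yop n i) \<phi> (mon \<delta>) \<gamma> \<noteq> 0) \<longrightarrow> (\<gamma>, \<delta>) \<in> S)"
  proof
    fix i assume "i \<in> {..<n}"
    then have "finsupp n (comm (Xop n i) \<phi>)" "finsupp n (comm (Yop n i) \<phi>)"
      using hyp F_finsupp by auto
    then obtain S1 S2 where S1: "finite S1" "\<forall>\<delta> \<gamma>. valid n \<delta> \<longrightarrow> comm (Xop n i) \<phi> (mon \<delta>) \<gamma> \<noteq> 0 \<longrightarrow> (\<gamma>, \<delta>) \<in> S1"
      and S2: "finite S2" "\<forall>\<delta> \<gamma>. valid n \<delta> \<longrightarrow> comm (Yop n i) \<phi> (mon \<delta>) \<gamma> \<noteq> 0 \<longrightarrow> (\<gamma>, \<delta>) \<in> S2"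
      unfolding finsupp_def by blast
    show "\<exists>S. finite S \<and> (\<forall>\<delta> \<gamma>. valid n \<delta> \<longrightarrow>
      (comm (Xop n i) \<phi> (mon \<delta>) \<gamma> \<noteq> 0 \<or> comm (Yop n i) \<phi> (mon \<delta>) \<gamma> \<noteq> 0) \<longrightarrow> (\<gamma>, \<delta>) \<in> S)"
      by (rule exI[of _ "S1 \<union> S2"]) (use S1 S2 in blast)
  qed
  then obtain Sf where Sf: "\<forall>i\<in>{..<n}. finite (Sf i) \<and> (\<forall>\<delta> \<gamma>. valid n \<delta> \<longrightarrow>
      (comm (Xop n i) \<phi> (mon \<delta>) \<gamma> \<noteq> 0 \<or> comm (Yop n i) \<phi> (mon \<delta>) \<gamma> \<noteq> 0) \<longrightarrow> (\<gamma>, \<delta>) \<in> Sf i)"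
    by (metis bchoice)
  let ?B = "\<Union>i<n. Sf i"
  have fB: "finite ?B" using Sf by auto
  let ?g = "\<lambda>s. dg n (fst s) + dg n (snd s)"
  have "finite (?g ` ?B)" using fB by simp
  then obtain T where T: "\<forall>x\<in>?g ` ?B. x < T" using finite_nat_set_iff_bounded by blast
  show ?thesis
  proof (rule exI[of _ T], intro allI impI)
    fix i \<delta> \<gamma> assume i: "i < n" and d: "valid n \<delta>" and le: "T \<le> dg n \<gamma> + dg n \<delta>"
    show "comm (Xop n i) \<phi> (mon \<delta>) \<gamma> = 0 \<and> comm (Yop n i) \<phi> (mon \<delta>) \<gamma> = 0"
    proof (rule ccontr)
      assume "\<not> ?thesis"
      then have "(\<gamma>, \<delta>) \<in> Sf i" using Sf i d by auto
      then have "(\<gamma>, \<delta>) \<in> ?B" using i by auto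
      then have "?g (\<gamma>, \<delta>) < T" using T by blast
      then show False using le by simp
    qed
  qed
qed

lemma finite_small:
  "finite {\<gamma> :: nat \<Rightarrow> nat. valid n \<gamma> \<and> dg n \<gamma> \<le> T}"
proof -
  have "{\<gamma> :: nat \<Rightarrow> nat. valid n \<gamma> \<and> dg n \<gamma> \<le> T} \<subseteq>
        {f. \<forall>x. (x \<in> {..<n} \<longrightarrow> f x \<in> {..T}) \<and> (x \<notin> {..<n} \<longrightarrow> f x = 0)}"
  proof
    fix \<gamma> :: "nat \<Rightarrow> nat" assume "\<gamma> \<in> {\<gamma>. valid n \<gamma> \<and> dg n \<gamma> \<le> T}"
    then have v: "valid n \<gamma>" and dT: "dg n \<gamma> \<le> T" by auto
    have A: "\<gamma> x \<in> {..T}" if "x \<in> {..<n}" for x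
    proof -
      have "\<gamma> x \<le> dg n \<gamma>" unfolding dg_def using that by (intro member_le_sum) auto
      then show ?thesis using dT by simp
    qed
    have B: "\<gamma> x = 0" if "x \<notin> {..<n}" for x using v that unfolding valid_def by auto
    show "\<gamma> \<in> {f. \<forall>x. (x \<in> {..<n} \<longrightarrow> f x \<in> {..T}) \<and> (x \<notin> {..<n} \<longrightarrow> f x = 0)}"
      using A B by blast
  qed
  moreover have "finite {f. \<forall>x. (x \<in> {..<n} \<longrightarrow> f x \<in> {..T}) \<and> (x \<notin> {..<n} \<longrightarrow> f x = (0::nat))}"
    by (rule finite_set_of_finite_funs) auto
  ultimately show ?thesis by (rule finite_subset)
qed

lemma hard_KF:
  fixes \<phi> :: "('k::field) op"
  assumes n2: "2 \<le> n" and \<phi>E: "\<phi> \<in> EndK n"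
    and hyp: "\<forall>i<n. comm (Xop n i) \<phi> \<in> F n \<and> comm (Yop n i) \<phi> \<in> F n"
  shows "\<phi> \<in> KplusF n"
proof -
  obtain T where T0: "\<forall>i \<delta> \<gamma>. i < n \<longrightarrow> valid n \<delta> \<longrightarrow> T \<le> dg n \<gamma> + dg n \<delta> \<longrightarrow>
       comm (Xop n i) \<phi> (mon \<delta>) \<gamma> = 0 \<and> comm (Yop n i) \<phi> (mon \<delta>) \<gamma> = 0"
    using exists_T[OF hyp] by blast
  have bT: "\<And>i \<delta> \<gamma>. i < n \<Longrightarrow> valid n \<delta> \<Longrightarrow> T \<le> dg n \<gamma> + dg n \<delta> \<Longrightarrow>
       comm (Xop n i) \<phi> (mon \<delta>) \<gamma> = 0 \<and> comm (Yop n i) \<phi> (mon \<delta>) \<gamma> = 0"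
    using T0 by blast
  define c0 :: "nat \<Rightarrow> nat" where "c0 = (\<lambda>_. 0)(0 := T)"
  have n0: "0 < n" using n2 by simp
  have vc0: "valid n c0" unfolding c0_def valid_def using n0 by auto
  have dc0: "dg n c0 = T" using dg_upd[OF n0, of "\<lambda>_. 0" T] by (simp add: c0_def dg_def)
  define c where "c = \<phi> (mon c0) c0"
  define f where "f = (\<lambda>p \<gamma>. \<phi> p \<gamma> - c * Idop n p \<gamma>)"
  have cI: "(\<lambda>p \<gamma>. c * Idop n p \<gamma>) \<in> EndK n" by (intro EndK_smult Idop_EndK)
  have fE: "f \<in> EndK n" unfolding f_def using EndK_diff_op[OF \<phi>E cI] by simp
  let ?S = "{\<gamma> :: nat \<Rightarrow> nat. valid n \<gamma> \<and> dg n \<gamma> \<le> T} \<times> {\<gamma>. valid n \<gamma> \<and> dg n \<gamma> \<le> T}"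
  have fs: "finsupp n f"
  proof (rule finsuppI[of ?S])
    show "finite ?S" using finite_small by blast
  next
    fix \<delta> \<gamma> assume d: "valid n \<delta>" and nz: "f (mon \<delta>) \<gamma> \<noteq> 0"
    have fv: "f (mon \<delta>) \<gamma> = \<phi> (mon \<delta>) \<gamma> - c * mon \<delta> \<gamma>" unfolding f_def by (simp add: Idop_mono[OF d])
    have g: "valid n \<gamma>"
    proof (rule ccontr)
      assume ng: "\<not> valid n \<gamma>"
      have "\<phi> (mon \<delta>) \<gamma> = 0" using EndK_Pn[OF \<phi>E, of "mon \<delta>"] ng by (auto simp: Pn_def)
      moreover have "\<gamma> \<noteq> \<delta>" using ng d by auto
      ultimately show False using nz fv by (simp add: mon_def)
    qed
    have small: "dg n \<gamma> + dg n \<delta> \<le> T"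
    proof (rule ccontr)
      assume "\<not> ?thesis"
      then have big: "Suc T \<le> dg n \<gamma> + dg n \<delta>" by simp
      show False
      proof (cases "\<gamma> = \<delta>")
        case True
        have "\<phi> (mon \<delta>) \<delta> = \<phi> (mon c0) c0"
        proof (rule diag[OF \<phi>E bT d vc0])
          have "Suc T \<le> dg n \<delta> + dg n \<delta>" using big True by simp
          then show "T \<le> 2 * dg n \<delta>" by linarith
          show "T \<le> 2 * dg n c0" using dc0 by linarith
        qed
        then show False using nz fv True by (simp add: c_def mon_def)
      next
        case False
        then obtain i where i: "i < n" "\<gamma> i \<noteq> \<delta> i" using valid_eq[OF g d] by auto
        have "\<phi> (mon \<delta>) \<gamma> = 0" by (rule offdiag[OF \<phi>E bT n2 i(1) g d big i(2)])
        then show False using nz fv False by (simp add: mon_def)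
      qed
    qed
    have "dg n \<gamma> \<le> T" "dg n \<delta> \<le> T" using small by auto
    then show "(\<gamma>, \<delta>) \<in> ?S" using g d by simp
  qed
  have fF: "f \<in> F n" by (rule finsupp_F[OF fE fs])
  have "\<phi> = (\<lambda>p \<gamma>. c * Idop n p \<gamma> + f p \<gamma>)" unfolding f_def by simp
  then show ?thesis unfolding KplusF_def using fF by blast
qed



definition u :: "nat \<Rightarrow> nat \<Rightarrow> nat" where "u k = (\<lambda>_. 0)(0 := k)"

lemma u_valid: "valid 1 (u k)" unfolding u_def valid_def by auto
lemma u_dg: "dg 1 (u k) = k" unfolding u_def dg_def by simp
lemma u_0: "u k 0 = k" unfolding u_def by simp
lemma u_upd: "(u k)(0 := m) = u m" unfolding u_def by simp
lemma u_inj: "(u k = u l) = (k = l)" unfolding u_def by (auto simp: fun_eq_iff)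
lemma u_valid': "valid (Suc 0) (u k)" using u_valid by simp
lemma u_dg': "dg (Suc 0) (u k) = k" using u_dg by simp
lemma valid1_u: "valid 1 \<gamma> \<Longrightarrow> \<gamma> = u (\<gamma> 0)"
proof
  fix x assume v: "valid 1 \<gamma>"
  show "\<gamma> x = u (\<gamma> 0) x" using v unfolding valid_def u_def by (cases x) auto
qed

lemma sum_if_eq: "finite A \<Longrightarrow> (\<Sum>d\<in>A. (if P \<and> d = e then (a d :: 'k::field) else 0)) = (if P \<and> e \<in> A then a e else 0)"
  by (cases P) auto

context
  fixes \<phi> :: "('k::field) op" and T :: nat
  assumes \<phi>E: "\<phi> \<in> EndK 1"
    and bT: "\<And>i \<delta> \<gamma>. i < 1 \<Longrightarrow> valid 1 \<delta> \<Longrightarrow> T \<le> dg 1 \<gamma> + dg 1 \<delta> \<Longrightarrow>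
       comm (Xop 1 i) \<phi> (mon \<delta>) \<gamma> = 0 \<and> comm (Yop 1 i) \<phi> (mon \<delta>) \<gamma> = 0"
begin

definition m :: "nat \<Rightarrow> nat \<Rightarrow> 'k" where "m k l = \<phi> (mon (u l)) (u k)"

lemma m_iter: "T \<le> k + l \<Longrightarrow> m (k + t) (l + t) = m k l"
proof -
  assume "T \<le> k + l"
  then have "\<phi> (mon ((u l)(0 := u l 0 + t))) ((u k)(0 := u k 0 + t)) = \<phi> (mon (u l)) (u k)"
    by (intro iterA[OF \<phi>E bT]) (simp_all add: u_valid u_dg u_valid' u_dg')
  then show ?thesis unfolding m_def u_0 u_upd .
qed

lemma m_B2: "T \<le> k \<Longrightarrow> m (Suc k) 0 = 0"
proof -
  assume "T \<le> k"
  then have "\<phi> (mon (u 0)) ((u k)(0 := Suc (u k 0))) = 0"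
    by (intro stepB2[OF \<phi>E bT]) (simp_all add: u_valid u_dg u_0 u_valid' u_dg')
  then show ?thesis unfolding m_def u_0 u_upd .
qed

lemma m_B1: "T \<le> l \<Longrightarrow> m 0 (Suc l) = 0"
proof -
  assume "T \<le> l"
  then have "\<phi> (mon ((u l)(0 := Suc (u l 0)))) (u 0) = 0"
    by (intro stepB1[OF \<phi>E bT]) (simp_all add: u_valid u_dg u_0 u_valid' u_dg')
  then show ?thesis unfolding m_def u_0 u_upd .
qed

definition a :: "nat \<Rightarrow> 'k" where "a d = m (d + T) T"
definition b :: "nat \<Rightarrow> 'k" where "b d = m T (d + T)"

lemma L1: "T \<le> k + l \<Longrightarrow> l \<le> k \<Longrightarrow> m k l = a (k - l)"
proof -
  assume kl: "T \<le> k + l" "l \<le> k"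
  show ?thesis
  proof (cases "T \<le> l")
    case True
    have e: "k - l + T + (l - T) = k" "T + (l - T) = l" using True kl by auto
    have "m k l = m (k - l + T + (l - T)) (T + (l - T))" by (simp only: e)
    also have "\<dots> = m (k - l + T) T" by (rule m_iter) simp
    finally show ?thesis by (simp only: a_def)
  next
    case False
    have e: "k + (T - l) = k - l + T" "l + (T - l) = T" using False kl by auto
    have "m (k + (T - l)) (l + (T - l)) = m k l" by (rule m_iter) (use kl in simp)
    then show ?thesis by (simp only: a_def e)
  qed
qed

lemma L2: "T \<le> k + l \<Longrightarrow> k \<le> l \<Longrightarrow> m k l = b (l - k)"
proof -
  assume kl: "T \<le> k + l" "k \<le> l"
  show ?thesis
  proof (cases "T \<le> k")
    case True
    have e: "l - k + T + (k - T) = l" "T + (k - T) = k" using True kl by auto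
    have "m k l = m (T + (k - T)) (l - k + T + (k - T))" by (simp only: e)
    also have "\<dots> = m T (l - k + T)" by (rule m_iter) simp
    finally show ?thesis by (simp only: b_def)
  next
    case False
    have e: "l + (T - k) = l - k + T" "k + (T - k) = T" using False kl by auto
    have "m (k + (T - k)) (l + (T - k)) = m k l" by (rule m_iter) (use kl in simp)
    then show ?thesis by (simp only: b_def e)
  qed
qed

lemma L3: "T < d \<Longrightarrow> a d = 0"
proof -
  assume d: "T < d"
  have "a d = m d 0" using L1[of d 0] d by (simp del: One_nat_def)
  also have "\<dots> = m (Suc (d - 1)) 0" using d by simp
  also have "\<dots> = 0" by (rule m_B2) (use d in simp)
  finally show ?thesis .
qed

lemma L4: "T < d \<Longrightarrow> b d = 0"
proof -
  assume d: "T < d"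
  have "b d = m 0 d" using L2[of 0 d] d by simp
  also have "\<dots> = m 0 (Suc (d - 1))" using d by simp
  also have "\<dots> = 0" by (rule m_B1) (use d in simp)
  finally show ?thesis .
qed

definition Gop :: "'k op" where
  "Gop = (\<lambda>p \<gamma>. (\<Sum>d\<in>{..T}. a d * ((Xop 1 0 ^^ d) \<circ> Idop 1) p \<gamma>)
               + (\<Sum>d\<in>{1..T}. b d * ((Yop 1 0 ^^ d) \<circ> Idop 1) p \<gamma>))"

lemma Gop_Salg: "Gop \<in> Salg 1"
proof -
  have 1: "(\<lambda>p \<gamma>. \<Sum>d\<in>{..T}. a d * ((Xop 1 0 ^^ d) \<circ> Idop 1) p \<gamma>) \<in> Salg 1"
  proof (rule Salg_sum)
    show "\<forall>d\<in>{..T}. (Xop 1 0 ^^ d) \<circ> Idop 1 \<in> Salg 1" using Salg_Xpow[OF zero_less_one Salg.one] by blast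
  qed simp
  have 2: "(\<lambda>p \<gamma>. \<Sum>d\<in>{1..T}. b d * ((Yop 1 0 ^^ d) \<circ> Idop 1) p \<gamma>) \<in> Salg 1"
  proof (rule Salg_sum)
    show "\<forall>d\<in>{1..T}. (Yop 1 0 ^^ d) \<circ> Idop 1 \<in> Salg 1" using Salg_Ypow[OF zero_less_one Salg.one] by blast
  qed simp
  show ?thesis unfolding Gop_def using Salg.add[OF 1 2] by simp
qed

lemma Gop_mon: "Gop (mon (u l)) (u k) = (if l \<le> k \<and> k - l \<le> T then a (k - l) else 0)
   + (if k < l \<and> l - k \<le> T then b (l - k) else 0)"
proof -
  have X: "((Xop 1 0 ^^ d) \<circ> Idop 1) (mon (u l)) (u k) = (if l \<le> k \<and> d = k - l then 1 else (0::'k))" for d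
  proof -
    have "((Xop 1 0 ^^ d) \<circ> Idop 1) (mon (u l)) = (Xop 1 0 ^^ d) (mon (u l) :: 'k pol)"
      by (simp add: Idop_mono[OF u_valid] Idop_mono[OF u_valid'])
    also have "\<dots> = mon ((u l)(0 := u l 0 + d))" by (rule Xpow_mono[OF _ u_valid]) simp
    also have "\<dots> = mon (u (l + d))" by (simp only: u_0 u_upd)
    finally show ?thesis by (auto simp: mon_def u_inj)
  qed
  have Y: "((Yop 1 0 ^^ d) \<circ> Idop 1) (mon (u l)) (u k) = (if k < l \<and> d = l - k then 1 else (0::'k))"
    if d1: "1 \<le> d" for d
  proof -
    have "((Yop 1 0 ^^ d) \<circ> Idop 1) (mon (u l)) = (Yop 1 0 ^^ d) (mon (u l) :: 'k pol)"
      by (simp add: Idop_mono[OF u_valid] Idop_mono[OF u_valid'])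
    also have "\<dots> = (if d \<le> u l 0 then mon ((u l)(0 := u l 0 - d)) else (\<lambda>_. 0))"
      by (rule Ypow_mono[OF _ u_valid]) simp
    also have "\<dots> = (if d \<le> l then mon (u (l - d)) else (\<lambda>_. 0))" by (simp only: u_0 u_upd)
    finally show ?thesis using d1 by (auto simp: mon_def u_inj)
  qed
  have "Gop (mon (u l)) (u k) = (\<Sum>d\<in>{..T}. (if l \<le> k \<and> d = k - l then a d else 0))
        + (\<Sum>d\<in>{1..T}. (if k < l \<and> d = l - k then b d else 0))"
  proof -
    have g: "Gop (mon (u l)) (u k) = (\<Sum>d\<in>{..T}. a d * ((Xop 1 0 ^^ d) \<circ> Idop 1) (mon (u l)) (u k))
               + (\<Sum>d\<in>{1..T}. b d * ((Yop 1 0 ^^ d) \<circ> Idop 1) (mon (u l)) (u k))"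
      by (simp only: Gop_def)
    have s1: "(\<Sum>d\<in>{..T}. a d * ((Xop 1 0 ^^ d) \<circ> Idop 1) (mon (u l)) (u k))
        = (\<Sum>d\<in>{..T}. (if l \<le> k \<and> d = k - l then a d else 0))"
      by (rule sum.cong[OF refl]) (unfold X, simp)
    have s2: "(\<Sum>d\<in>{1..T}. b d * ((Yop 1 0 ^^ d) \<circ> Idop 1) (mon (u l)) (u k))
        = (\<Sum>d\<in>{1..T}. (if k < l \<and> d = l - k then b d else 0))"
    proof (rule sum.cong[OF refl])
      fix d assume "d \<in> {1..T}"
      then have "1 \<le> d" by simp
      show "b d * ((Yop 1 0 ^^ d) \<circ> Idop 1) (mon (u l)) (u k) = (if k < l \<and> d = l - k then b d else 0)"
        unfolding Y[OF \<open>1 \<le> d\<close>] by simp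
    qed
    show ?thesis unfolding g s1 s2 ..
  qed
  also have "\<dots> = (if l \<le> k \<and> k - l \<le> T then a (k - l) else 0)
   + (if k < l \<and> l - k \<le> T then b (l - k) else 0)"
    by (simp add: sum_if_eq) auto
  finally show ?thesis .
qed

lemma hard_S1_aux: "\<phi> \<in> Salg 1"
proof -
  have GE: "Gop \<in> EndK 1" using Gop_Salg Salg_EndK by auto
  define f where "f = (\<lambda>p \<gamma>. \<phi> p \<gamma> - Gop p \<gamma>)"
  have fE: "f \<in> EndK 1" unfolding f_def by (rule EndK_diff_op[OF \<phi>E GE])
  let ?S = "(\<lambda>(k, l). (u k, u l)) ` ({..<T} \<times> {..<T})"
  have fs: "finsupp 1 f"
  proof (rule finsuppI[of ?S])
    show "finite ?S" by simp
  next
    fix \<delta> \<gamma> assume d: "valid 1 \<delta>" and nz: "f (mon \<delta>) \<gamma> \<noteq> 0"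
    have g: "valid 1 \<gamma>"
    proof (rule ccontr)
      assume ng: "\<not> valid 1 \<gamma>"
      have "\<phi> (mon \<delta>) \<gamma> = 0" using EndK_Pn[OF \<phi>E, of "mon \<delta>"] ng by (auto simp: Pn_def)
      moreover have "Gop (mon \<delta>) \<gamma> = 0" using EndK_Pn[OF GE, of "mon \<delta>"] ng by (auto simp: Pn_def)
      ultimately show False using nz by (simp add: f_def)
    qed
    define k where "k = \<gamma> 0"
    define l where "l = \<delta> 0"
    have gk: "\<gamma> = u k" and dl: "\<delta> = u l" using valid1_u g d by (auto simp: k_def l_def)
    have small: "k + l < T"
    proof (rule ccontr)
      assume "\<not> ?thesis"
      then have big: "T \<le> k + l" by simp
      have "Gop (mon (u l)) (u k) = m k l"
      proof (cases "l \<le> k")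
        case True
        then show ?thesis unfolding Gop_mon using L1[OF big True] L3[of "k - l"] by auto
      next
        case False
        then show ?thesis unfolding Gop_mon using L2[OF big] L4[of "l - k"] by auto
      qed
      then have "f (mon \<delta>) \<gamma> = 0" unfolding f_def gk dl m_def by simp
      then show False using nz by simp
    qed
    show "(\<gamma>, \<delta>) \<in> ?S" unfolding gk dl using small by (intro rev_image_eqI[of "(k, l)"]) auto
  qed
  have fS: "f \<in> Salg 1" using F_Salg[OF finsupp_F[OF fE fs]] .
  have "\<phi> = (\<lambda>p \<gamma>. Gop p \<gamma> + f p \<gamma>)" unfolding f_def by simp
  then show ?thesis using Salg.add[OF Gop_Salg fS] by simp
qed

end

lemma hard_S1:
  fixes \<phi> :: "('k::field) op"
  assumes \<phi>E: "\<phi> \<in> EndK 1"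
    and hyp: "\<forall>i<1. comm (Xop 1 i) \<phi> \<in> F 1 \<and> comm (Yop 1 i) \<phi> \<in> F 1"
  shows "\<phi> \<in> Salg 1"
proof -
  obtain T where T0: "\<forall>i \<delta> \<gamma>. i < 1 \<longrightarrow> valid 1 \<delta> \<longrightarrow> T \<le> dg 1 \<gamma> + dg 1 \<delta> \<longrightarrow>
       comm (Xop 1 i) \<phi> (mon \<delta>) \<gamma> = 0 \<and> comm (Yop 1 i) \<phi> (mon \<delta>) \<gamma> = 0"
    using exists_T[OF hyp] by blast
  have bT: "\<And>i \<delta> \<gamma>. i < 1 \<Longrightarrow> valid 1 \<delta> \<Longrightarrow> T \<le> dg 1 \<gamma> + dg 1 \<delta> \<Longrightarrow>
       comm (Xop 1 i) \<phi> (mon \<delta>) \<gamma> = 0 \<and> comm (Yop 1 i) \<phi> (mon \<delta>) \<gamma> = 0"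
    using T0 by blast
  show ?thesis by (rule hard_S1_aux[OF \<phi>E bT])
qed

theorem corollary6p7:
  fixes n :: nat
  assumes "n \<ge> 1"
  shows "{\<phi> \<in> (EndK n :: ('k::field_char_0) op set).
            \<forall>i<n. comm (Xop n i) \<phi> \<in> F n \<and> comm (Yop n i) \<phi> \<in> F n}
         = (if n = 1 then Salg 1 else KplusF n)"
proof (cases "n = 1")
  case True
  show ?thesis unfolding True using hard_S1 Salg1_sub by auto
next
  case False
  then have n2: "2 \<le> n" using assms by simp
  show ?thesis using False hard_KF[OF n2] KplusF_sub by auto
qed

end
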